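(* Let $p$ be a prime and $V$ an abelian group. The following are equivalent: (1) the $p$-primary torsion subgroup of $V$ is bounded (annihilated by some power of $p$); (2) the canonical map $\operatorname*{colim}_{n\in\mathbb{N}}\mathrm{Ext}^1_{\mathbb{Z}}(V/p^n,\mathbb{Z}/p)\to\mathrm{Ext}^1_{\mathbb{Z}}(V,\mathbb{Z}/p)$, induced by the projections $V\to V/p^n$, is an isomorphism.
   Context: $V/p^n$ denotes $V/p^nV$. *)

theory Defs
  imports "HOL-Algebra.Algebra" "HOL-Number_Theory.Cong"
begin

text \<open>Ext^1_Z(G, Z/p) is modelled by the classical description via factor sets
  (Fuchs, Infinite Abelian Groups): symmetric 2-cocycles G x G -> Z/p modulo
  coboundaries. Values in Z/p are represented by integers, compared modulo p.\<close>

definition ppow_sub :: "('a, 'b) monoid_scheme \<Rightarrow> nat \<Rightarrow> 'a set" where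
  "ppow_sub G m = {x [^]\<^bsub>G\<^esub> m | x. x \<in> carrier G}"

definition quot_pn :: "('a, 'b) monoid_scheme \<Rightarrow> nat \<Rightarrow> nat \<Rightarrow> 'a set monoid" where
  "quot_pn G p n = G Mod (ppow_sub G (p ^ n))"

definition proj_pn :: "('a, 'b) monoid_scheme \<Rightarrow> nat \<Rightarrow> nat \<Rightarrow> 'a \<Rightarrow> 'a set" where
  "proj_pn G p n = (\<lambda>x. ppow_sub G (p ^ n) #>\<^bsub>G\<^esub> x)"

definition trans_pn :: "('a, 'b) monoid_scheme \<Rightarrow> nat \<Rightarrow> nat \<Rightarrow> 'a set \<Rightarrow> 'a set" where
  "trans_pn G p n = (\<lambda>C. ppow_sub G (p ^ n) <#>\<^bsub>G\<^esub> C)"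

definition cocycles :: "('a, 'b) monoid_scheme \<Rightarrow> nat \<Rightarrow> ('a \<Rightarrow> 'a \<Rightarrow> int) set" where
  "cocycles G p = {f.
     (\<forall>a b. a \<notin> carrier G \<or> b \<notin> carrier G \<longrightarrow> f a b = 0) \<and>
     (\<forall>a\<in>carrier G. \<forall>b\<in>carrier G. [f a b = f b a] (mod int p)) \<and>
     (\<forall>a\<in>carrier G. \<forall>b\<in>carrier G. \<forall>c\<in>carrier G.
        [f a b + f (a \<otimes>\<^bsub>G\<^esub> b) c = f b c + f a (b \<otimes>\<^bsub>G\<^esub> c)] (mod int p))}"

definition coboundary :: "('a, 'b) monoid_scheme \<Rightarrow> nat \<Rightarrow> ('a \<Rightarrow> 'a \<Rightarrow> int) \<Rightarrow> bool" where
  "coboundary G p f \<longleftrightarrow> (\<exists>g :: 'a \<Rightarrow> int. \<forall>a\<in>carrier G. \<forall>b\<in>carrier G.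
      [f a b = g a + g b - g (a \<otimes>\<^bsub>G\<^esub> b)] (mod int p))"

definition ext_rel :: "('a, 'b) monoid_scheme \<Rightarrow> nat \<Rightarrow> (('a \<Rightarrow> 'a \<Rightarrow> int) \<times> ('a \<Rightarrow> 'a \<Rightarrow> int)) set" where
  "ext_rel G p = {(f, g). f \<in> cocycles G p \<and> g \<in> cocycles G p \<and>
      coboundary G p (\<lambda>a b. f a b - g a b)}"

text \<open>Ext^1_Z(G, Z/p) as a set of classes (its group structure is not needed:
  a bijective homomorphism is an isomorphism).\<close>
definition Ext1 :: "('a, 'b) monoid_scheme \<Rightarrow> nat \<Rightarrow> ('a \<Rightarrow> 'a \<Rightarrow> int) set set" where
  "Ext1 G p = cocycles G p // ext_rel G p"

definition pullback :: "('a, 'b) monoid_scheme \<Rightarrow> ('a \<Rightarrow> 'c) \<Rightarrow> ('c \<Rightarrow> 'c \<Rightarrow> int) \<Rightarrow> 'a \<Rightarrow> 'a \<Rightarrow> int" where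
  "pullback G \<phi> f = (\<lambda>a b. if a \<in> carrier G \<and> b \<in> carrier G then f (\<phi> a) (\<phi> b) else 0)"

text \<open>The colimit colim_n Ext^1(G/p^n, Z/p) along the maps induced by G/p^k -> G/p^n:
  pairs (n, f) with f a factor set on G/p^n, where (n,f) ~ (m,g) iff their images
  in some Ext^1(G/p^k, Z/p), k >= n, m, coincide.\<close>
definition colim_rel :: "('a, 'b) monoid_scheme \<Rightarrow> nat \<Rightarrow>
    ((nat \<times> ('a set \<Rightarrow> 'a set \<Rightarrow> int)) \<times> (nat \<times> ('a set \<Rightarrow> 'a set \<Rightarrow> int))) set" where
  "colim_rel G p = {((n, f), (m, g)).
      f \<in> cocycles (quot_pn G p n) p \<and> g \<in> cocycles (quot_pn G p m) p \<and>
      (\<exists>k \<ge> max n m.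
         (pullback (quot_pn G p k) (trans_pn G p n) f,
          pullback (quot_pn G p k) (trans_pn G p m) g) \<in> ext_rel (quot_pn G p k) p)}"

definition colim_Ext1 :: "('a, 'b) monoid_scheme \<Rightarrow> nat \<Rightarrow> (nat \<times> ('a set \<Rightarrow> 'a set \<Rightarrow> int)) set set" where
  "colim_Ext1 G p = (SIGMA n:UNIV. cocycles (quot_pn G p n) p) // colim_rel G p"

definition canon_map :: "('a, 'b) monoid_scheme \<Rightarrow> nat \<Rightarrow>
    (nat \<times> ('a set \<Rightarrow> 'a set \<Rightarrow> int)) set \<Rightarrow> ('a \<Rightarrow> 'a \<Rightarrow> int) set" where
  "canon_map G p S = (let y = (SOME y. y \<in> S) in
      Image (ext_rel G p) {pullback G (proj_pn G p (fst y)) (snd y)})"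

definition p_torsion_bounded :: "('a, 'b) monoid_scheme \<Rightarrow> nat \<Rightarrow> bool" where
  "p_torsion_bounded G p \<longleftrightarrow> (\<exists>k::nat. \<forall>x\<in>carrier G.
      (\<exists>m::nat. x [^]\<^bsub>G\<^esub> (p ^ m) = \<one>\<^bsub>G\<^esub>) \<longrightarrow> x [^]\<^bsub>G\<^esub> (p ^ k) = \<one>\<^bsub>G\<^esub>)"

end

theory Submission
  imports Defs
begin

lemma dvd_lin: "(m::int) dvd a \<Longrightarrow> m dvd b \<Longrightarrow> m dvd (a + b)" "(m::int) dvd a \<Longrightarrow> m dvd b \<Longrightarrow> m dvd (a - b)"
  "(m::int) dvd a \<Longrightarrow> m dvd (- a)"
  by auto

locale cocyc = comm_group G for G :: "('a,'b) monoid_scheme" (structure) +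
  fixes p :: nat and f :: "'a \<Rightarrow> 'a \<Rightarrow> int"
  assumes f_coc: "f \<in> cocycles G p"
begin

lemma f_out: "a \<notin> carrier G \<or> b \<notin> carrier G \<Longrightarrow> f a b = 0"
  using f_coc unfolding cocycles_def by auto

lemma f_sym: "a \<in> carrier G \<Longrightarrow> b \<in> carrier G \<Longrightarrow> int p dvd (f a b - f b a)"
  using f_coc unfolding cocycles_def cong_iff_dvd_diff by auto

lemma f_cc: "a \<in> carrier G \<Longrightarrow> b \<in> carrier G \<Longrightarrow> c \<in> carrier G \<Longrightarrow>
   int p dvd (f a b + f (a \<otimes> b) c - f b c - f a (b \<otimes> c))"
  using f_coc unfolding cocycles_def cong_iff_dvd_diff by (auto simp: algebra_simps)

lemma f_norm: "a \<in> carrier G \<Longrightarrow> int p dvd (f a \<one> - f \<one> \<one>)"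
  using f_cc[of a \<one> \<one>] by simp

lemma f_norm2: "a \<in> carrier G \<Longrightarrow> int p dvd (f \<one> a - f \<one> \<one>)"
proof -
  assume a: "a \<in> carrier G"
  have "f \<one> a - f \<one> \<one> = (f \<one> a - f a \<one>) + (f a \<one> - f \<one> \<one>)" by simp
  thus ?thesis using f_sym[of \<one> a] f_norm[OF a] a by (metis dvd_add one_closed)
qed

lemma f_four:
  assumes A: "A \<in> carrier G" and a: "a \<in> carrier G" and B: "B \<in> carrier G" and b: "b \<in> carrier G"
  shows "int p dvd (f (A \<otimes> a) (B \<otimes> b) - (f A B + f a b + f (A \<otimes> B) (a \<otimes> b) - f A a - f B b))"
proof -
  have h1: "int p dvd (f A a + f (A \<otimes> a) (B \<otimes> b) - f a (B \<otimes> b) - f A (a \<otimes> (B \<otimes> b)))"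
    using f_cc[of A a "B \<otimes> b"] A a B b by simp
  have h2: "int p dvd (f a B + f (a \<otimes> B) b - f B b - f a (B \<otimes> b))"
    using f_cc[of a B b] A a B b by simp
  have h3: "int p dvd (f A B + f (A \<otimes> B) (a \<otimes> b) - f B (a \<otimes> b) - f A (B \<otimes> (a \<otimes> b)))"
    using f_cc[of A B "a \<otimes> b"] A a B b by simp
  have h4: "int p dvd (f B a + f (B \<otimes> a) b - f a b - f B (a \<otimes> b))"
    using f_cc[of B a b] A a B b by simp
  have h5: "int p dvd (f a B - f B a)" using f_sym a B by simp
  have e1: "a \<otimes> (B \<otimes> b) = B \<otimes> (a \<otimes> b)" using a B b by (simp add: m_lcomm)
  have e2: "a \<otimes> B = B \<otimes> a" using a B by (simp add: m_comm)
  have "f (A \<otimes> a) (B \<otimes> b) - (f A B + f a b + f (A \<otimes> B) (a \<otimes> b) - f A a - f B b)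
     = (f A a + f (A \<otimes> a) (B \<otimes> b) - f a (B \<otimes> b) - f A (a \<otimes> (B \<otimes> b)))
     - (f a B + f (a \<otimes> B) b - f B b - f a (B \<otimes> b))
     - (f A B + f (A \<otimes> B) (a \<otimes> b) - f B (a \<otimes> b) - f A (B \<otimes> (a \<otimes> b)))
     + (f B a + f (B \<otimes> a) b - f a b - f B (a \<otimes> b))
     + (f a B - f B a)"
    unfolding e1 e2 by simp
  thus ?thesis using h1 h2 h3 h4 h5 by (metis dvd_lin(1,2))
qed

definition T :: "nat \<Rightarrow> 'a \<Rightarrow> int" where "T m a = (\<Sum>i<m. f (a [^] i) a)"

lemma f_pow:
  assumes a: "a \<in> carrier G" and b: "b \<in> carrier G"
  shows "int p dvd (f (a [^] m) (b [^] m) - (int m * f a b + T m (a \<otimes> b) - T m a - T m b + f \<one> \<one>))"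
proof (induction m)
  case 0
  then show ?case by (simp add: T_def)
next
  case (Suc m)
  have h: "int p dvd (f (a [^] m \<otimes> a) (b [^] m \<otimes> b) - (f (a [^] m) (b [^] m) + f a b
      + f (a [^] m \<otimes> b [^] m) (a \<otimes> b) - f (a [^] m) a - f (b [^] m) b))"
    using f_four[of "a [^] m" a "b [^] m" b] a b by simp
  have e: "a [^] m \<otimes> b [^] m = (a \<otimes> b) [^] m" using a b by (simp add: pow_mult_distrib m_comm)
  have "f (a [^] Suc m) (b [^] Suc m) - (int (Suc m) * f a b + T (Suc m) (a \<otimes> b) - T (Suc m) a - T (Suc m) b + f \<one> \<one>)
    = (f (a [^] m \<otimes> a) (b [^] m \<otimes> b) - (f (a [^] m) (b [^] m) + f a b
      + f (a [^] m \<otimes> b [^] m) (a \<otimes> b) - f (a [^] m) a - f (b [^] m) b))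
    + (f (a [^] m) (b [^] m) - (int m * f a b + T m (a \<otimes> b) - T m a - T m b + f \<one> \<one>))"
    unfolding e by (simp add: T_def algebra_simps)
  then show ?case using h Suc.IH by (metis dvd_lin(1))
qed

end

lemma pullback_coc:
  assumes f: "f \<in> cocycles H p"
    and cl: "\<And>a. a \<in> carrier G \<Longrightarrow> \<phi> a \<in> carrier H"
    and hm: "\<And>a b. a \<in> carrier G \<Longrightarrow> b \<in> carrier G \<Longrightarrow> \<phi> (a \<otimes>\<^bsub>G\<^esub> b) = \<phi> a \<otimes>\<^bsub>H\<^esub> \<phi> b"
    and mc: "\<And>a b. a \<in> carrier G \<Longrightarrow> b \<in> carrier G \<Longrightarrow> a \<otimes>\<^bsub>G\<^esub> b \<in> carrier G"
  shows "pullback G \<phi> f \<in> cocycles G p"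
  using f unfolding cocycles_def pullback_def
  by (auto simp: cl hm mc)

lemma pullback_ext:
  assumes f: "(f1, f2) \<in> ext_rel H p"
    and cl: "\<And>a. a \<in> carrier G \<Longrightarrow> \<phi> a \<in> carrier H"
    and hm: "\<And>a b. a \<in> carrier G \<Longrightarrow> b \<in> carrier G \<Longrightarrow> \<phi> (a \<otimes>\<^bsub>G\<^esub> b) = \<phi> a \<otimes>\<^bsub>H\<^esub> \<phi> b"
    and mc: "\<And>a b. a \<in> carrier G \<Longrightarrow> b \<in> carrier G \<Longrightarrow> a \<otimes>\<^bsub>G\<^esub> b \<in> carrier G"
  shows "(pullback G \<phi> f1, pullback G \<phi> f2) \<in> ext_rel G p"
proof -
  have c1: "f1 \<in> cocycles H p" and c2: "f2 \<in> cocycles H p"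
    and cb: "coboundary H p (\<lambda>a b. f1 a b - f2 a b)" using f unfolding ext_rel_def by auto
  from cb obtain g where g: "\<forall>a\<in>carrier H. \<forall>b\<in>carrier H.
      [f1 a b - f2 a b = g a + g b - g (a \<otimes>\<^bsub>H\<^esub> b)] (mod int p)"
    unfolding coboundary_def by blast
  have "coboundary G p (\<lambda>a b. pullback G \<phi> f1 a b - pullback G \<phi> f2 a b)"
    unfolding coboundary_def
    by (rule exI[of _ "g \<circ> \<phi>"]) (auto simp: pullback_def hm cl g)
  thus ?thesis unfolding ext_rel_def
    using pullback_coc[OF c1 cl hm mc] pullback_coc[OF c2 cl hm mc] by auto
qed

lemma ext_equiv: "equiv (cocycles G p) (ext_rel G p)"
proof (rule equivI)
  show "refl_on (cocycles G p) (ext_rel G p)"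
    unfolding refl_on_def ext_rel_def coboundary_def
    by (auto intro!: exI[of _ "\<lambda>_. 0"])
  show "sym (ext_rel G p)"
  proof (rule symI)
    fix f g assume "(f, g) \<in> ext_rel G p"
    then obtain h where "f \<in> cocycles G p" "g \<in> cocycles G p" and h: "\<forall>a\<in>carrier G. \<forall>b\<in>carrier G.
      [f a b - g a b = h a + h b - h (a \<otimes>\<^bsub>G\<^esub> b)] (mod int p)"
      unfolding ext_rel_def coboundary_def by blast
    moreover have "\<forall>a\<in>carrier G. \<forall>b\<in>carrier G.
      [g a b - f a b = (- h a) + (- h b) - (- h (a \<otimes>\<^bsub>G\<^esub> b))] (mod int p)"
    proof (intro ballI)
      fix a b assume "a \<in> carrier G" "b \<in> carrier G"
      then have "int p dvd (f a b - g a b - (h a + h b - h (a \<otimes>\<^bsub>G\<^esub> b)))"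
        using h by (simp add: cong_iff_dvd_diff)
      then have "int p dvd - (f a b - g a b - (h a + h b - h (a \<otimes>\<^bsub>G\<^esub> b)))"
        by (simp only: dvd_minus_iff)
      moreover have "- (f a b - g a b - (h a + h b - h (a \<otimes>\<^bsub>G\<^esub> b)))
         = (g a b - f a b) - ((- h a) + (- h b) - (- h (a \<otimes>\<^bsub>G\<^esub> b)))" by simp
      ultimately show "[g a b - f a b = (- h a) + (- h b) - (- h (a \<otimes>\<^bsub>G\<^esub> b))] (mod int p)"
        unfolding cong_iff_dvd_diff by metis
    qed
    ultimately show "(g, f) \<in> ext_rel G p" unfolding ext_rel_def coboundary_def
      by (simp only: mem_Collect_eq case_prod_conv) (intro conjI exI[of _ "\<lambda>x. - h x"], auto)
  qed
  show "trans (ext_rel G p)"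
  proof (rule transI)
    fix f g k assume "(f, g) \<in> ext_rel G p" "(g, k) \<in> ext_rel G p"
    then obtain h1 h2 where "f \<in> cocycles G p" "k \<in> cocycles G p" and h1: "\<forall>a\<in>carrier G. \<forall>b\<in>carrier G.
      [f a b - g a b = h1 a + h1 b - h1 (a \<otimes>\<^bsub>G\<^esub> b)] (mod int p)"
      and h2: "\<forall>a\<in>carrier G. \<forall>b\<in>carrier G.
      [g a b - k a b = h2 a + h2 b - h2 (a \<otimes>\<^bsub>G\<^esub> b)] (mod int p)"
      unfolding ext_rel_def coboundary_def by blast
    moreover have "\<forall>a\<in>carrier G. \<forall>b\<in>carrier G.
      [f a b - k a b = (h1 a + h2 a) + (h1 b + h2 b) - (h1 (a \<otimes>\<^bsub>G\<^esub> b) + h2 (a \<otimes>\<^bsub>G\<^esub> b))] (mod int p)"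
    proof (intro ballI)
      fix a b assume "a \<in> carrier G" "b \<in> carrier G"
      then have "int p dvd (f a b - g a b - (h1 a + h1 b - h1 (a \<otimes>\<^bsub>G\<^esub> b)))"
        "int p dvd (g a b - k a b - (h2 a + h2 b - h2 (a \<otimes>\<^bsub>G\<^esub> b)))"
        using h1 h2 by (auto simp add: cong_iff_dvd_diff)
      from dvd_add[OF this]
      show "[f a b - k a b = (h1 a + h2 a) + (h1 b + h2 b) - (h1 (a \<otimes>\<^bsub>G\<^esub> b) + h2 (a \<otimes>\<^bsub>G\<^esub> b))] (mod int p)"
        by (simp add: cong_iff_dvd_diff algebra_simps)
    qed
    ultimately show "(f, k) \<in> ext_rel G p" unfolding ext_rel_def coboundary_def
      by (simp only: mem_Collect_eq case_prod_conv) (intro conjI exI[of _ "\<lambda>x. h1 x + h2 x"], auto)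
  qed
qed (auto simp: ext_rel_def)

lemma pullback_comp:
  assumes "\<And>a. a \<in> carrier G \<Longrightarrow> \<phi> a \<in> carrier H" "\<And>a. a \<in> carrier G \<Longrightarrow> \<psi> (\<phi> a) = \<chi> a"
  shows "pullback G \<phi> (pullback H \<psi> F) = pullback G \<chi> F"
  using assms unfolding pullback_def by (auto intro!: ext)


locale pc = comm_group V for V :: "('a,'b) monoid_scheme" (structure) +
  fixes p :: nat
  assumes prime_p: "Factorial_Ring.prime p"
begin

abbreviation N :: "nat \<Rightarrow> 'a set" where "N n \<equiv> ppow_sub V (p ^ n)"
abbreviation Q where "Q n \<equiv> quot_pn V p n"
abbreviation pr where "pr n \<equiv> proj_pn V p n"
abbreviation tr where "tr n \<equiv> trans_pn V p n"

lemma p_gt1: "p > 1" using prime_p prime_gt_1_nat by blast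

lemma ppow_subgroup: "subgroup (ppow_sub V m) V"
proof (rule subgroupI)
  show "ppow_sub V m \<subseteq> carrier V" unfolding ppow_sub_def by auto
  show "ppow_sub V m \<noteq> {}" unfolding ppow_sub_def by auto
  fix a assume "a \<in> ppow_sub V m"
  then obtain x where x: "x \<in> carrier V" "a = x [^] m" unfolding ppow_sub_def by auto
  then have "inv a = (inv x) [^] m" by (simp add: nat_pow_inv)
  thus "inv a \<in> ppow_sub V m" unfolding ppow_sub_def using x by auto
next
  fix a b assume "a \<in> ppow_sub V m" "b \<in> ppow_sub V m"
  then obtain x y where x: "x \<in> carrier V" "a = x [^] m" and y: "y \<in> carrier V" "b = y [^] m"
    unfolding ppow_sub_def by auto
  then have "a \<otimes> b = (x \<otimes> y) [^] m" by (simp add: pow_mult_distrib m_comm)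
  thus "a \<otimes> b \<in> ppow_sub V m" unfolding ppow_sub_def using x y by auto
qed

lemma N_sub: "subgroup (N n) V" by (rule ppow_subgroup)
lemma N_normal: "N n \<lhd> V" by (simp add: N_sub subgroup_imp_normal)
lemma N_carr: "N n \<subseteq> carrier V" by (rule subgroup.subset[OF N_sub])
lemma N_one: "\<one> \<in> N n" by (rule subgroup.one_closed[OF N_sub])
lemma N_mult: "a \<in> N n \<Longrightarrow> b \<in> N n \<Longrightarrow> a \<otimes> b \<in> N n" by (rule subgroup.m_closed[OF N_sub])
lemma N_inv: "a \<in> N n \<Longrightarrow> inv a \<in> N n" by (rule subgroup.m_inv_closed[OF N_sub])

lemma ppow_I: "x \<in> carrier V \<Longrightarrow> x [^] m \<in> ppow_sub V m"
  unfolding ppow_sub_def by auto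

lemma N_mono: assumes "n \<le> k" shows "N k \<subseteq> N n"
proof
  fix a assume "a \<in> N k"
  then obtain x where x: "x \<in> carrier V" "a = x [^] (p ^ k)" unfolding ppow_sub_def by auto
  have e: "p ^ (k - n) * p ^ n = p ^ k" using assms by (metis le_add_diff_inverse2 power_add)
  have "(x [^] (p ^ (k - n))) [^] (p ^ n) = x [^] (p ^ (k - n) * p ^ n)" by (rule nat_pow_pow[OF x(1)])
  then have "a = (x [^] (p ^ (k - n))) [^] (p ^ n)" using x(2) by (simp only: e)
  thus "a \<in> N n" using x by (simp add: ppow_I)
qed

lemma pr_def': "pr n a = N n #> a" by (simp add: proj_pn_def)

lemma carrier_Q: "carrier (Q n) = pr n ` carrier V"
  unfolding quot_pn_def proj_pn_def by (simp add: carrier_FactGroup)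

lemma pr_closed: "a \<in> carrier V \<Longrightarrow> pr n a \<in> carrier (Q n)"
  using carrier_Q by auto

lemma mult_Q: "(\<otimes>\<^bsub>Q n\<^esub>) = set_mult V" unfolding quot_pn_def by simp

lemma pr_mult: "a \<in> carrier V \<Longrightarrow> b \<in> carrier V \<Longrightarrow> pr n (a \<otimes> b) = pr n a \<otimes>\<^bsub>Q n\<^esub> pr n b"
  unfolding mult_Q proj_pn_def using normal.rcos_sum[OF N_normal] by simp

lemma Q_group: "comm_group (Q n)"
  unfolding quot_pn_def using abelian_FactGroup[OF N_sub] .

lemma Q_mclosed: "S1 \<in> carrier (Q n) \<Longrightarrow> S2 \<in> carrier (Q n) \<Longrightarrow> S1 \<otimes>\<^bsub>Q n\<^esub> S2 \<in> carrier (Q n)"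
  using Q_group by (simp add: comm_group_def group_def monoid.m_closed)

lemma pr_eq_iff: "a \<in> carrier V \<Longrightarrow> b \<in> carrier V \<Longrightarrow> pr n a = pr n b \<longleftrightarrow> a \<otimes> inv b \<in> N n"
proof -
  assume a: "a \<in> carrier V" and b: "b \<in> carrier V"
  have "pr n a = pr n b \<longleftrightarrow> a \<in> N n #> b"
    unfolding pr_def' using repr_independence[OF _ b N_sub] repr_independenceD[OF N_sub a]
    by blast
  also have "\<dots> \<longleftrightarrow> a \<otimes> inv b \<in> N n"
    using subgroup.rcos_module[OF N_sub is_group b a] by simp
  finally show ?thesis .
qed

lemma pr_N: "a \<in> N n \<Longrightarrow> pr n a = N n"
  unfolding pr_def' using subgroup.rcos_const[OF N_sub is_group] by simp

lemma pr_one: "pr n \<one> = N n" using pr_N N_one by simp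

lemma tr_pr: assumes "n \<le> k" "a \<in> carrier V" shows "tr n (pr k a) = pr n a"
proof -
  have "N n <#> N k = N n"
  proof
    show "N n <#> N k \<subseteq> N n" unfolding set_mult_def using N_mono[OF assms(1)] N_mult by blast
    show "N n \<subseteq> N n <#> N k"
    proof
      fix x assume "x \<in> N n"
      then have "x = x \<otimes> \<one>" "\<one> \<in> N k" using N_carr[of n] N_one by auto
      thus "x \<in> N n <#> N k" unfolding set_mult_def using \<open>x \<in> N n\<close> by blast
    qed
  qed
  thus ?thesis unfolding trans_pn_def proj_pn_def
    using setmult_rcos_assoc[OF N_carr N_carr assms(2)] by simp
qed

lemma tr_closed: "n \<le> k \<Longrightarrow> S1 \<in> carrier (Q k) \<Longrightarrow> tr n S1 \<in> carrier (Q n)"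
  using carrier_Q tr_pr pr_closed by auto

lemma tr_mult: assumes "n \<le> k" "S1 \<in> carrier (Q k)" "S2 \<in> carrier (Q k)"
  shows "tr n (S1 \<otimes>\<^bsub>Q k\<^esub> S2) = tr n S1 \<otimes>\<^bsub>Q n\<^esub> tr n S2"
proof -
  obtain a b where "a \<in> carrier V" "b \<in> carrier V" "S1 = pr k a" "S2 = pr k b"
    using assms carrier_Q by auto
  moreover have "tr n (pr k a \<otimes>\<^bsub>Q k\<^esub> pr k b) = pr n (a \<otimes> b)"
    using calculation assms(1) by (simp add: pr_mult[symmetric] tr_pr)
  ultimately show ?thesis using assms(1) by (simp add: pr_mult tr_pr)
qed

lemma tr_tr: assumes "n \<le> m" "m \<le> k" "S1 \<in> carrier (Q k)" shows "tr n (tr m S1) = tr n S1"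
  using assms carrier_Q tr_pr by auto

lemma tr_id: "S1 \<in> carrier (Q n) \<Longrightarrow> tr n S1 = S1"
  using carrier_Q tr_pr by auto


lemma N_ipow: "z \<in> N n \<Longrightarrow> z [^] (k::int) \<in> N n"
  by (rule subgroup_int_pow_closed[OF N_sub])

lemma N_pow: "z \<in> N n \<Longrightarrow> z [^] (k::nat) \<in> N n"
  using N_ipow[of z n "int k"] by (simp add: int_pow_int)

lemma V_mc: "a \<in> carrier V \<Longrightarrow> b \<in> carrier V \<Longrightarrow> a \<otimes> b \<in> carrier V" by simp

abbreviation pb where "pb k n F \<equiv> pullback (Q k) (tr n) F"

lemma pb_pr_coc: "F \<in> cocycles (Q n) p \<Longrightarrow> pullback V (pr n) F \<in> cocycles V p"
  by (rule pullback_coc) (auto simp: pr_closed pr_mult)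

lemma pb_tr_coc: "n \<le> k \<Longrightarrow> F \<in> cocycles (Q n) p \<Longrightarrow> pb k n F \<in> cocycles (Q k) p"
  by (rule pullback_coc) (auto simp: tr_closed tr_mult Q_mclosed)

lemma coc_out: "F \<in> cocycles G p \<Longrightarrow> a \<notin> carrier G \<or> b \<notin> carrier G \<Longrightarrow> F a b = 0"
  unfolding cocycles_def by auto

lemma pb_tr_id: "F \<in> cocycles (Q n) p \<Longrightarrow> pb n n F = F"
  unfolding pullback_def by (auto intro!: ext simp: tr_id coc_out)

lemma pb_tr_comp: "n \<le> m \<Longrightarrow> m \<le> k \<Longrightarrow> pb k m (pb m n F) = pb k n F"
  by (rule pullback_comp) (auto simp: tr_closed tr_tr)

lemma pb_pr_comp: "n \<le> k \<Longrightarrow> pullback V (pr k) (pb k n F) = pullback V (pr n) F"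
  by (rule pullback_comp) (auto simp: pr_closed tr_pr)

lemma ext_pb_tr: "m \<le> k \<Longrightarrow> (F1, F2) \<in> ext_rel (Q m) p \<Longrightarrow> (pb k m F1, pb k m F2) \<in> ext_rel (Q k) p"
  by (rule pullback_ext) (auto simp: tr_closed tr_mult Q_mclosed)

lemma ext_pb_pr: "(F1, F2) \<in> ext_rel (Q k) p \<Longrightarrow> (pullback V (pr k) F1, pullback V (pr k) F2) \<in> ext_rel V p"
  by (rule pullback_ext) (auto simp: pr_closed pr_mult)

abbreviation SIG where "SIG \<equiv> (SIGMA n:UNIV. cocycles (Q n) p)"

lemma ext_refl: "f \<in> cocycles G p \<Longrightarrow> (f, f) \<in> ext_rel G p"
  using ext_equiv[of G p] unfolding equiv_def refl_on_def by blast
lemma ext_sym: "(f, g) \<in> ext_rel G p \<Longrightarrow> (g, f) \<in> ext_rel G p"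
  using ext_equiv[of G p] unfolding equiv_def by (meson symD)
lemma ext_trans: "(f, g) \<in> ext_rel G p \<Longrightarrow> (g, h) \<in> ext_rel G p \<Longrightarrow> (f, h) \<in> ext_rel G p"
  using ext_equiv[of G p] unfolding equiv_def by (meson transD)

lemma colim_equiv: "equiv SIG (colim_rel V p)"
proof (rule equivI)
  show "colim_rel V p \<subseteq> SIG \<times> SIG" unfolding colim_rel_def by auto
  show "refl_on SIG (colim_rel V p)"
  proof (rule refl_onI)
    fix x assume "x \<in> SIG"
    then obtain n F where x: "x = (n, F)" "F \<in> cocycles (Q n) p" by auto
    then have "(pb n n F, pb n n F) \<in> ext_rel (Q n) p" using pb_tr_id ext_refl by simp
    thus "(x, x) \<in> colim_rel V p" unfolding colim_rel_def using x by auto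
  qed
  show "sym (colim_rel V p)"
  proof (rule symI)
    fix x y assume "(x, y) \<in> colim_rel V p"
    thus "(y, x) \<in> colim_rel V p" unfolding colim_rel_def
      by (auto simp: max.commute intro: ext_sym)
  qed
  show "trans (colim_rel V p)"
  proof (rule transI)
    fix x y z assume xy: "(x, y) \<in> colim_rel V p" and yz: "(y, z) \<in> colim_rel V p"
    obtain n F m G l H where xyz: "x = (n, F)" "y = (m, G)" "z = (l, H)"
      by (metis prod.exhaust)
    from xy obtain k1 where F: "F \<in> cocycles (Q n) p" and G: "G \<in> cocycles (Q m) p" and k1: "k1 \<ge> max n m"
      and r1: "(pb k1 n F, pb k1 m G) \<in> ext_rel (Q k1) p"
      unfolding colim_rel_def xyz by auto
    from yz obtain k2 where H: "H \<in> cocycles (Q l) p" and k2: "k2 \<ge> max m l"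
      and r2: "(pb k2 m G, pb k2 l H) \<in> ext_rel (Q k2) p"
      unfolding colim_rel_def xyz by auto
    define k where "k = max k1 k2"
    have "(pb k k1 (pb k1 n F), pb k k1 (pb k1 m G)) \<in> ext_rel (Q k) p"
      using ext_pb_tr[OF _ r1] k_def by simp
    then have s1: "(pb k n F, pb k m G) \<in> ext_rel (Q k) p"
      using pb_tr_comp k_def k1 by simp
    have "(pb k k2 (pb k2 m G), pb k k2 (pb k2 l H)) \<in> ext_rel (Q k) p"
      using ext_pb_tr[OF _ r2] k_def by simp
    then have s2: "(pb k m G, pb k l H) \<in> ext_rel (Q k) p"
      using pb_tr_comp k_def k2 by simp
    have "k \<ge> max n l" using k_def k1 k2 by auto
    thus "(x, z) \<in> colim_rel V p" unfolding colim_rel_def xyz using F H ext_trans[OF s1 s2] by auto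
  qed
qed

lemma canon_class:
  assumes F: "F \<in> cocycles (Q n) p"
  shows "canon_map V p (colim_rel V p `` {(n, F)}) = ext_rel V p `` {pullback V (pr n) F}"
proof -
  let ?S = "colim_rel V p `` {(n, F)}"
  have "(n, F) \<in> ?S" using colim_equiv F unfolding equiv_def refl_on_def by auto
  then have yS: "(SOME y. y \<in> ?S) \<in> ?S" by (rule someI)
  obtain m G where y: "(SOME y. y \<in> ?S) = (m, G)" by (metis prod.exhaust)
  from yS have "((n, F), (m, G)) \<in> colim_rel V p" unfolding y by simp
  then obtain k where G: "G \<in> cocycles (Q m) p" and k: "k \<ge> max n m"
    and r: "(pb k n F, pb k m G) \<in> ext_rel (Q k) p"
    unfolding colim_rel_def by auto
  have "(pullback V (pr n) F, pullback V (pr m) G) \<in> ext_rel V p"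
    using ext_pb_pr[OF r] pb_pr_comp k by simp
  then have "ext_rel V p `` {pullback V (pr m) G} = ext_rel V p `` {pullback V (pr n) F}"
    by (metis equiv_class_eq ext_equiv ext_sym)
  thus ?thesis unfolding canon_map_def Let_def y by simp
qed

lemma rcos_elem: "x \<in> N k #> a \<Longrightarrow> \<exists>c\<in>N k. x = c \<otimes> a"
  unfolding r_coset_def by auto

lemma inj_key:
  assumes F: "F \<in> cocycles (Q n) p" and G: "G \<in> cocycles (Q m) p"
    and r: "(pullback V (pr n) F, pullback V (pr m) G) \<in> ext_rel V p"
  shows "((n, F), (m, G)) \<in> colim_rel V p"
proof -
  define n' where "n' = max n m"
  define k where "k = Suc n'"
  obtain g where g: "\<forall>a\<in>carrier V. \<forall>b\<in>carrier V.
      [pullback V (pr n) F a b - pullback V (pr m) G a b = g a + g b - g (a \<otimes> b)] (mod int p)"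
    using r unfolding ext_rel_def coboundary_def by auto
  define D where "D a b = F (pr n a) (pr n b) - G (pr m a) (pr m b)" for a b
  have gD: "int p dvd (D a b - (g a + g b - g (a \<otimes> b)))" if "a \<in> carrier V" "b \<in> carrier V" for a b
    using g that unfolding D_def pullback_def cong_iff_dvd_diff by auto
  have step1: "int p dvd (g (c \<otimes> b) - (g b + g c - g \<one>))" if c: "c \<in> N n'" and b: "b \<in> carrier V" for c b
  proof -
    have cV: "c \<in> carrier V" using c N_carr by auto
    have "c \<in> N n" "c \<in> N m" using c N_mono[of n n'] N_mono[of m n'] n'_def by auto
    then have "pr n c = pr n \<one>" "pr m c = pr m \<one>" using pr_N pr_one by auto
    then have "D c b = D \<one> b" unfolding D_def by simp
    moreover have "int p dvd (D c b - (g c + g b - g (c \<otimes> b)))" using gD cV b by auto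
    moreover have "int p dvd (D \<one> b - g \<one>)" using gD[of \<one> b] b by simp
    ultimately have "int p dvd ((D \<one> b - g \<one>) - (D c b - (g c + g b - g (c \<otimes> b))))"
      by (metis dvd_lin(2))
    moreover have "(D \<one> b - g \<one>) - (D c b - (g c + g b - g (c \<otimes> b)))
       = - (g (c \<otimes> b) - (g b + g c - g \<one>))" using b \<open>D c b = D \<one> b\<close> by simp
    ultimately show ?thesis by (metis dvd_minus_iff)
  qed
  have step2: "int p dvd (g (z [^] j) - g \<one> - int j * (g z - g \<one>))" if z: "z \<in> N n'" for z j
  proof (induction j)
    case 0 then show ?case by simp
  next
    case (Suc j)
    have zV: "z \<in> carrier V" using z N_carr by auto
    have "int p dvd (g (z [^] j \<otimes> z) - (g z + g (z [^] j) - g \<one>))"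
      using step1[OF N_pow[OF z] zV] .
    from dvd_lin(1)[OF this Suc.IH] show ?case by (simp add: algebra_simps)
  qed
  have step3: "int p dvd (g (c \<otimes> b) - g b)" if c: "c \<in> N k" and b: "b \<in> carrier V" for c b
  proof -
    obtain y where y: "y \<in> carrier V" "c = y [^] (p ^ k)" using c unfolding ppow_sub_def by auto
    define z where "z = y [^] (p ^ n')"
    have zN: "z \<in> N n'" unfolding z_def using y ppow_I by auto
    have "c = z [^] p" unfolding z_def y(2) k_def using y(1) by (simp add: nat_pow_pow mult.commute)
    moreover have "int p dvd (g (z [^] p) - g \<one> - int p * (g z - g \<one>))" using step2[OF zN, of p] .
    ultimately have "int p dvd (g c - g \<one> - int p * (g z - g \<one>))" by simp
    from dvd_lin(1)[OF this dvd_triv_left[of "int p" "g z - g \<one>"]]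
    have "int p dvd (g c - g \<one>)" by simp
    moreover have "c \<in> N n'" using c N_mono[of n' k] k_def by auto
    ultimately have "int p dvd ((g (c \<otimes> b) - (g b + g c - g \<one>)) + (g c - g \<one>))"
      using step1[OF _ b, of c] dvd_lin(1) by blast
    thus ?thesis by (simp add: algebra_simps)
  qed
  define h where "h S = g (SOME x. x \<in> S)" for S
  have hpr: "int p dvd (h (pr k a) - g a)" if a: "a \<in> carrier V" for a
  proof -
    have "a \<in> pr k a" unfolding pr_def' using rcos_self[OF a N_sub] .
    then have "(SOME x. x \<in> pr k a) \<in> pr k a" by (rule someI)
    then obtain c where "c \<in> N k" "(SOME x. x \<in> pr k a) = c \<otimes> a" unfolding pr_def' using rcos_elem by blast
    thus ?thesis unfolding h_def using step3 a by auto
  qed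
  have cb: "coboundary (Q k) p (\<lambda>S1 S2. pb k n F S1 S2 - pb k m G S1 S2)"
    unfolding coboundary_def
  proof (intro exI[of _ h] ballI)
    fix S1 S2 assume "S1 \<in> carrier (Q k)" "S2 \<in> carrier (Q k)"
    then obtain a b where ab: "a \<in> carrier V" "b \<in> carrier V" "S1 = pr k a" "S2 = pr k b"
      using carrier_Q by auto
    have e: "pb k n F S1 S2 - pb k m G S1 S2 = D a b"
      unfolding D_def pullback_def ab using ab n'_def k_def by (simp add: pr_closed tr_pr)
    have e2: "S1 \<otimes>\<^bsub>Q k\<^esub> S2 = pr k (a \<otimes> b)" using ab pr_mult by simp
    have "int p dvd (D a b - (g a + g b - g (a \<otimes> b)))" using gD ab by auto
    moreover have "int p dvd (h S1 - g a)" "int p dvd (h S2 - g b)" "int p dvd (h (pr k (a \<otimes> b)) - g (a \<otimes> b))"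
      using hpr ab by auto
    ultimately have "int p dvd ((D a b - (g a + g b - g (a \<otimes> b))) - (h S1 - g a) - (h S2 - g b) + (h (pr k (a \<otimes> b)) - g (a \<otimes> b)))"
      by (metis dvd_lin(1,2))
    thus "[pb k n F S1 S2 - pb k m G S1 S2 = h S1 + h S2 - h (S1 \<otimes>\<^bsub>Q k\<^esub> S2)] (mod int p)"
      unfolding cong_iff_dvd_diff e e2 by (simp add: algebra_simps)
  qed
  have "(pb k n F, pb k m G) \<in> ext_rel (Q k) p"
    unfolding ext_rel_def using cb pb_tr_coc F G n'_def k_def by auto
  moreover have "k \<ge> max n m" using n'_def k_def by (simp add: max_def)
  ultimately show ?thesis unfolding colim_rel_def using F G by blast
qed


lemma surj_key:
  assumes bnd: "\<forall>x\<in>carrier V. (\<exists>m. x [^] (p ^ m) = \<one>) \<longrightarrow> x [^] (p ^ k) = \<one>"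
    and k1: "k \<ge> 1" and fc: "f \<in> cocycles V p"
  shows "\<exists>F \<in> cocycles (Q (2 * k)) p. (f, pullback V (pr (2 * k)) F) \<in> ext_rel V p"
proof -
  interpret C: cocyc V p f by unfold_locales (rule fc)
  define m where "m = p ^ k"
  define n where "n = 2 * k"
  have pm: "int p dvd int m" unfolding m_def using k1 by (simp add: dvd_power)
  have pmn: "p ^ n = m * m" unfolding m_def n_def by (simp add: power_add[symmetric] mult_2)
  have C_B: "c [^] m \<in> N n" if c: "c \<in> N k" for c
  proof -
    obtain y where y: "y \<in> carrier V" "c = y [^] m" using c unfolding ppow_sub_def m_def by auto
    then have "c [^] m = y [^] (p ^ n)" by (simp add: nat_pow_pow pmn)
    thus ?thesis using y ppow_I by simp
  qed
  have B_C: "\<exists>c \<in> N k. b = c [^] m" if b: "b \<in> N n" for b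
  proof -
    obtain y where y: "y \<in> carrier V" "b = y [^] (p ^ n)" using b unfolding ppow_sub_def by auto
    then have "b = (y [^] m) [^] m" by (simp add: nat_pow_pow pmn)
    moreover have "y [^] m \<in> N k" using y ppow_I m_def by simp
    ultimately show ?thesis by blast
  qed
  have notors: "c = \<one>" if c: "c \<in> N k" and cm: "c [^] m = \<one>" for c
  proof -
    obtain y where y: "y \<in> carrier V" "c = y [^] m" using c unfolding ppow_sub_def m_def by auto
    then have "y [^] (p ^ n) = \<one>" using cm by (simp add: nat_pow_pow pmn)
    then have "y [^] (p ^ k) = \<one>" using bnd y(1) by blast
    thus ?thesis using y m_def by simp
  qed
  have uniq: "c1 = c2" if c1: "c1 \<in> N k" and c2: "c2 \<in> N k" and e: "c1 [^] m = c2 [^] m" for c1 c2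
  proof -
    have cV: "c1 \<in> carrier V" "c2 \<in> carrier V" using c1 c2 N_carr by auto
    have "(c1 \<otimes> inv c2) [^] m = c1 [^] m \<otimes> inv (c2 [^] m)"
      using cV by (simp add: pow_mult_distrib m_comm nat_pow_inv)
    also have "\<dots> = \<one>" using e cV by simp
    finally have "c1 \<otimes> inv c2 = \<one>" using notors N_mult N_inv c1 c2 by blast
    moreover have "c1 = (c1 \<otimes> inv c2) \<otimes> c2" using cV by (simp add: m_assoc)
    ultimately show ?thesis using cV by simp
  qed
  define root where "root b = (SOME c. c \<in> N k \<and> c [^] m = b)" for b
  have root: "root b \<in> N k \<and> root b [^] m = b" if "b \<in> N n" for b
  proof -
    have "\<exists>c. c \<in> N k \<and> c [^] m = b" using B_C[OF that] by auto
    thus ?thesis unfolding root_def by (rule someI_ex)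
  qed
  have root_eq: "root b = c" if "c \<in> N k" "b = c [^] m" for b c
  proof -
    have "b \<in> N n" using C_B that by simp
    then have "root b \<in> N k" "root b [^] m = b" using root by auto
    thus ?thesis using uniq[of "root b" c] that by simp
  qed
  have root_mult: "root (b1 \<otimes> b2) = root b1 \<otimes> root b2" if "b1 \<in> N n" "b2 \<in> N n" for b1 b2
  proof (rule root_eq)
    have r: "root b1 \<in> N k" "root b2 \<in> N k" "root b1 [^] m = b1" "root b2 [^] m = b2" using root that by auto
    show "root b1 \<otimes> root b2 \<in> N k" using r N_mult by simp
    have "root b1 \<in> carrier V" "root b2 \<in> carrier V" using r N_carr by auto
    then show "b1 \<otimes> b2 = (root b1 \<otimes> root b2) [^] m"
      using root that by (simp add: pow_mult_distrib m_comm)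
  qed
  define g where "g b = f \<one> \<one> - C.T m (root b)" for b
  have dB: "int p dvd (f b1 b2 - (g b1 + g b2 - g (b1 \<otimes> b2)))" if b: "b1 \<in> N n" "b2 \<in> N n" for b1 b2
  proof -
    obtain c1 c2 where c1: "root b1 = c1" and c2: "root b2 = c2" by blast
    have c: "c1 \<in> carrier V" "c2 \<in> carrier V" "b1 = c1 [^] m" "b2 = c2 [^] m"
      using root[OF b(1)] root[OF b(2)] N_carr c1 c2 by auto
    have r12: "root (b1 \<otimes> b2) = c1 \<otimes> c2" using root_mult[OF b] c1 c2 by simp
    have h: "int p dvd (f (c1 [^] m) (c2 [^] m) - (int m * f c1 c2 + C.T m (c1 \<otimes> c2) - C.T m c1 - C.T m c2 + f \<one> \<one>))"
      using C.f_pow[OF c(1) c(2)] .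
    have g1: "g b1 = f \<one> \<one> - C.T m c1" unfolding g_def c1 ..
    have g2: "g b2 = f \<one> \<one> - C.T m c2" unfolding g_def c2 ..
    have g12: "g (b1 \<otimes> b2) = f \<one> \<one> - C.T m (c1 \<otimes> c2)" unfolding g_def r12 ..
    have fb: "f b1 b2 = f (c1 [^] m) (c2 [^] m)" using c(3,4) by simp
    have "f b1 b2 - (g b1 + g b2 - g (b1 \<otimes> b2)) =
       (f (c1 [^] m) (c2 [^] m) - (int m * f c1 c2 + C.T m (c1 \<otimes> c2) - C.T m c1 - C.T m c2 + f \<one> \<one>))
       + int m * f c1 c2"
      unfolding g1 g2 g12 fb by simp
    thus ?thesis by (simp only:) (rule dvd_add[OF h dvd_mult2[OF pm]])
  qed
  have dB1: "int p dvd (f \<one> \<one> - g \<one>)" using dB[of \<one> \<one>] N_one by simp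
  define s where "s S = (SOME x. x \<in> S)" for S :: "'a set"
  define r where "r v = s (pr n v)" for v
  define \<beta> where "\<beta> v = inv (r v) \<otimes> v" for v
  have rprop: "r v \<in> carrier V \<and> \<beta> v \<in> N n \<and> r v \<otimes> \<beta> v = v \<and> pr n (r v) = pr n v" if v: "v \<in> carrier V" for v
  proof -
    have "v \<in> pr n v" unfolding pr_def' using rcos_self[OF v N_sub] .
    then have "r v \<in> pr n v" unfolding r_def s_def by (rule someI)
    then obtain c where c: "c \<in> N n" "r v = c \<otimes> v" unfolding pr_def' using rcos_elem by blast
    have cV: "c \<in> carrier V" using c N_carr by auto
    have "\<beta> v = inv c" unfolding \<beta>_def c(2) using cV v by (simp add: inv_mult m_assoc)
    moreover have "pr n (r v) = pr n v" using repr_independence[OF \<open>r v \<in> pr n v\<close>[unfolded pr_def'] v N_sub]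
      unfolding pr_def' by simp
    moreover have "(c \<otimes> v) \<otimes> inv c = v" using cV v by (simp add: m_comm[of c v] m_assoc)
    ultimately show ?thesis using c cV v N_inv by auto
  qed
  have r_cong: "r v = r w" if "pr n v = pr n w" for v w unfolding r_def using that by simp
  have r_r: "r (r v) = r v" "\<beta> (r v) = \<one>" if v: "v \<in> carrier V" for v
  proof -
    show "r (r v) = r v" using r_cong rprop v by blast
    then show "\<beta> (r v) = \<one>" unfolding \<beta>_def using rprop v by simp
  qed
  define G where "G v = f (r v) (\<beta> v) - g (\<beta> v)" for v
  define f' where "f' v w = f v w + G v + G w - G (v \<otimes> w)" for v w
  have MI: "int p dvd (f' v w - f' (r v) (r w))" if v: "v \<in> carrier V" and w: "w \<in> carrier V" for v w
  proof -
    obtain a b c d where ab: "r v = a" "\<beta> v = b" "r w = c" "\<beta> w = d" by blast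
    obtain e where e: "r (v \<otimes> w) = e" by blast
    have abcd: "a \<in> carrier V" "b \<in> N n" "c \<in> carrier V" "d \<in> N n" "a \<otimes> b = v" "c \<otimes> d = w"
      using rprop[OF v] rprop[OF w] ab by auto
    have bdV: "b \<in> carrier V" "d \<in> carrier V" using abcd N_carr by auto
    have eV: "e \<in> carrier V" using rprop[of "v \<otimes> w"] v w e by simp
    have prac: "pr n a = pr n v" "pr n c = pr n w" using rprop[OF v] rprop[OF w] ab by auto
    have "pr n (a \<otimes> c) = pr n (v \<otimes> w)"
      using pr_mult[of a c n] pr_mult[of v w n] prac abcd v w by simp
    then have rac: "r (a \<otimes> c) = e" using r_cong e by metis
    obtain \<gamma> where \<gamma>def: "\<beta> (a \<otimes> c) = \<gamma>" by blast
    have acV: "a \<otimes> c \<in> carrier V" using abcd by simp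
    have \<gamma>: "\<gamma> \<in> N n" "e \<otimes> \<gamma> = a \<otimes> c" using rprop[OF acV] rac \<gamma>def by auto
    have \<gamma>V: "\<gamma> \<in> carrier V" using \<gamma> N_carr by auto
    have vw: "v \<otimes> w = e \<otimes> (\<gamma> \<otimes> (b \<otimes> d))"
    proof -
      have "v \<otimes> w = (a \<otimes> b) \<otimes> (c \<otimes> d)" using abcd by simp
      also have "\<dots> = (a \<otimes> c) \<otimes> (b \<otimes> d)" using abcd(1,3) bdV by (simp add: m_ac)
      also have "\<dots> = (e \<otimes> \<gamma>) \<otimes> (b \<otimes> d)" using \<gamma> by simp
      also have "\<dots> = e \<otimes> (\<gamma> \<otimes> (b \<otimes> d))" using eV \<gamma>V bdV by (simp add: m_assoc)
      finally show ?thesis .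
    qed
    have "\<beta> (v \<otimes> w) = inv e \<otimes> (v \<otimes> w)" unfolding \<beta>_def e ..
    also have "\<dots> = inv e \<otimes> (e \<otimes> (\<gamma> \<otimes> (b \<otimes> d)))" unfolding vw ..
    also have "\<dots> = \<gamma> \<otimes> (b \<otimes> d)" using eV \<gamma>V bdV by (simp add: m_assoc[symmetric])
    finally have bvw: "\<beta> (v \<otimes> w) = \<gamma> \<otimes> (b \<otimes> d)" .
    have Gv: "G v = f a b - g b" unfolding G_def ab ..
    have Gw: "G w = f c d - g d" unfolding G_def ab ..
    have Gvw: "G (v \<otimes> w) = f e (\<gamma> \<otimes> (b \<otimes> d)) - g (\<gamma> \<otimes> (b \<otimes> d))"
      unfolding G_def e bvw ..
    have ra: "r a = a" "\<beta> a = \<one>" using r_r[OF v] ab by auto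
    have rc: "r c = c" "\<beta> c = \<one>" using r_r[OF w] ab by auto
    have Ga: "G a = f a \<one> - g \<one>" unfolding G_def ra ..
    have Gc: "G c = f c \<one> - g \<one>" unfolding G_def rc ..
    have Gac: "G (a \<otimes> c) = f e \<gamma> - g \<gamma>" unfolding G_def rac \<gamma>def ..
    have H1: "int p dvd (f (a \<otimes> b) (c \<otimes> d) - (f a c + f b d + f (a \<otimes> c) (b \<otimes> d) - f a b - f c d))"
      using C.f_four[OF abcd(1) bdV(1) abcd(3) bdV(2)] .
    have H2: "int p dvd (f e \<gamma> + f (e \<otimes> \<gamma>) (b \<otimes> d) - f \<gamma> (b \<otimes> d) - f e (\<gamma> \<otimes> (b \<otimes> d)))"
      using C.f_cc[OF eV \<gamma>V] bdV by simp
    have H3: "int p dvd (f \<gamma> (b \<otimes> d) - (g \<gamma> + g (b \<otimes> d) - g (\<gamma> \<otimes> (b \<otimes> d))))"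
      using dB[OF \<gamma>(1) N_mult[OF abcd(2,4)]] .
    have H4: "int p dvd (f b d - (g b + g d - g (b \<otimes> d)))" using dB[OF abcd(2,4)] .
    have H5: "int p dvd (f a \<one> - f \<one> \<one>)" using C.f_norm[OF abcd(1)] .
    have H6: "int p dvd (f c \<one> - f \<one> \<one>)" using C.f_norm[OF abcd(3)] .
    have fvw: "f v w = f (a \<otimes> b) (c \<otimes> d)" using abcd by simp
    have fac: "f (a \<otimes> c) (b \<otimes> d) = f (e \<otimes> \<gamma>) (b \<otimes> d)" using \<gamma> by simp
    have eq: "f' v w - f' (r v) (r w) =
      (f (a \<otimes> b) (c \<otimes> d) - (f a c + f b d + f (a \<otimes> c) (b \<otimes> d) - f a b - f c d))
      + (f e \<gamma> + f (e \<otimes> \<gamma>) (b \<otimes> d) - f \<gamma> (b \<otimes> d) - f e (\<gamma> \<otimes> (b \<otimes> d)))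
      + (f \<gamma> (b \<otimes> d) - (g \<gamma> + g (b \<otimes> d) - g (\<gamma> \<otimes> (b \<otimes> d))))
      + (f b d - (g b + g d - g (b \<otimes> d)))
      - (f a \<one> - f \<one> \<one>) - (f c \<one> - f \<one> \<one>) - 2 * (f \<one> \<one> - g \<one>)"
      unfolding f'_def ab Gv Gw Gvw Ga Gc Gac fvw fac by simp
    show ?thesis unfolding eq
      by (intro H1 H2 H3 H4 H5 H6 dB1 dvd_add dvd_diff dvd_mult)
  qed
  define F where "F S1 S2 = (if S1 \<in> carrier (Q n) \<and> S2 \<in> carrier (Q n) then f' (s S1) (s S2) else 0)" for S1 S2
  have Fpr: "F (pr n v) (pr n w) = f' (r v) (r w)" if "v \<in> carrier V" "w \<in> carrier V" for v w
    unfolding F_def r_def using that pr_closed by simp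
  have Fcong: "int p dvd (F (pr n v) (pr n w) - f' v w)" if v: "v \<in> carrier V" and w: "w \<in> carrier V" for v w
    using MI[OF v w] Fpr[OF v w] by (simp add: dvd_diff_commute)
  have f'sym: "int p dvd (f' v w - f' w v)" if v: "v \<in> carrier V" and w: "w \<in> carrier V" for v w
    unfolding f'_def using C.f_sym[OF v w] v w by (simp add: m_comm)
  have f'cc: "int p dvd (f' x y + f' (x \<otimes> y) z - f' y z - f' x (y \<otimes> z))"
    if x: "x \<in> carrier V" and y: "y \<in> carrier V" and z: "z \<in> carrier V" for x y z
  proof -
    have "f' x y + f' (x \<otimes> y) z - f' y z - f' x (y \<otimes> z) = f x y + f (x \<otimes> y) z - f y z - f x (y \<otimes> z)"
      unfolding f'_def using x y z by (simp add: m_assoc)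
    thus ?thesis using C.f_cc[OF x y z] by simp
  qed
  have Fcoc: "F \<in> cocycles (Q n) p"
    unfolding cocycles_def mem_Collect_eq cong_iff_dvd_diff
  proof (intro conjI ballI allI impI)
    fix S1 S2 assume "S1 \<notin> carrier (Q n) \<or> S2 \<notin> carrier (Q n)"
    thus "F S1 S2 = 0" unfolding F_def by auto
  next
    fix S1 S2 assume "S1 \<in> carrier (Q n)" "S2 \<in> carrier (Q n)"
    then obtain v w where vw: "v \<in> carrier V" "w \<in> carrier V" "S1 = pr n v" "S2 = pr n w"
      using carrier_Q by auto
    have "F S1 S2 - F S2 S1 = (F (pr n v) (pr n w) - f' v w) - (F (pr n w) (pr n v) - f' w v) + (f' v w - f' w v)"
      using vw by simp
    have h: "int p dvd (F (pr n v) (pr n w) - f' v w)" "int p dvd (F (pr n w) (pr n v) - f' w v)"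
      "int p dvd (f' v w - f' w v)" using Fcong[of v w] Fcong[of w v] f'sym[of v w] vw by auto
    thus "int p dvd (F S1 S2 - F S2 S1)" unfolding \<open>F S1 S2 - F S2 S1 = _\<close>
      by (intro h dvd_add dvd_diff)
  next
    fix S1 S2 S3 assume "S1 \<in> carrier (Q n)" "S2 \<in> carrier (Q n)" "S3 \<in> carrier (Q n)"
    then obtain x y z where xyz: "x \<in> carrier V" "y \<in> carrier V" "z \<in> carrier V" "S1 = pr n x" "S2 = pr n y" "S3 = pr n z"
      using carrier_Q by force
    have m1: "S1 \<otimes>\<^bsub>Q n\<^esub> S2 = pr n (x \<otimes> y)" and m2: "S2 \<otimes>\<^bsub>Q n\<^esub> S3 = pr n (y \<otimes> z)"
      using xyz pr_mult by auto
    have "F S1 S2 + F (S1 \<otimes>\<^bsub>Q n\<^esub> S2) S3 - (F S2 S3 + F S1 (S2 \<otimes>\<^bsub>Q n\<^esub> S3)) =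
      (F (pr n x) (pr n y) - f' x y) + (F (pr n (x \<otimes> y)) (pr n z) - f' (x \<otimes> y) z)
      - (F (pr n y) (pr n z) - f' y z) - (F (pr n x) (pr n (y \<otimes> z)) - f' x (y \<otimes> z))
      + (f' x y + f' (x \<otimes> y) z - f' y z - f' x (y \<otimes> z))"
      unfolding m1 m2 using xyz by simp
    moreover have h: "int p dvd (F (pr n x) (pr n y) - f' x y)" "int p dvd (F (pr n (x \<otimes> y)) (pr n z) - f' (x \<otimes> y) z)"
      "int p dvd (F (pr n y) (pr n z) - f' y z)" "int p dvd (F (pr n x) (pr n (y \<otimes> z)) - f' x (y \<otimes> z))"
      "int p dvd (f' x y + f' (x \<otimes> y) z - f' y z - f' x (y \<otimes> z))"
      using Fcong[of x y] Fcong[of "x \<otimes> y" z] Fcong[of y z] Fcong[of x "y \<otimes> z"] f'cc[of x y z] xyz by auto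
    ultimately show "int p dvd (F S1 S2 + F (S1 \<otimes>\<^bsub>Q n\<^esub> S2) S3 - (F S2 S3 + F S1 (S2 \<otimes>\<^bsub>Q n\<^esub> S3)))"
      unfolding \<open>F S1 S2 + F (S1 \<otimes>\<^bsub>Q n\<^esub> S2) S3 - (F S2 S3 + F S1 (S2 \<otimes>\<^bsub>Q n\<^esub> S3)) = _\<close>
      using h by (intro h dvd_add dvd_diff)
  qed
  have cb: "coboundary V p (\<lambda>a b. f a b - pullback V (pr n) F a b)"
    unfolding coboundary_def
  proof (intro exI[of _ "\<lambda>v. - G v"] ballI)
    fix a b assume a: "a \<in> carrier V" and b: "b \<in> carrier V"
    have "f a b - pullback V (pr n) F a b - (- G a + - G b - - G (a \<otimes> b)) = - (F (pr n a) (pr n b) - f' a b)"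
      unfolding pullback_def f'_def using a b by simp
    thus "[f a b - pullback V (pr n) F a b = - G a + - G b - - G (a \<otimes> b)] (mod int p)"
      unfolding cong_iff_dvd_diff using Fcong[OF a b] by (metis dvd_minus_iff)
  qed
  have "(f, pullback V (pr n) F) \<in> ext_rel V p"
    unfolding ext_rel_def using fc pb_pr_coc[OF Fcoc] cb by auto
  thus ?thesis using Fcoc n_def by blast
qed


definition phom :: "'a set \<Rightarrow> ('a \<Rightarrow> rat) \<Rightarrow> bool" where
  "phom H \<Psi> \<longleftrightarrow> subgroup H V \<and> (\<forall>a\<in>H. \<forall>b\<in>H. \<Psi> a + \<Psi> b - \<Psi> (a \<otimes> b) \<in> \<int>)"

lemma phomD: "phom H \<Psi> \<Longrightarrow> a \<in> H \<Longrightarrow> b \<in> H \<Longrightarrow> \<Psi> a + \<Psi> b - \<Psi> (a \<otimes> b) \<in> \<int>"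
  unfolding phom_def by blast

lemma phom_sub: "phom H \<Psi> \<Longrightarrow> subgroup H V"
  unfolding phom_def by blast

lemma phom_one: assumes "phom H \<Psi>" shows "\<Psi> \<one> \<in> \<int>"
proof -
  have o: "\<one> \<in> H" using phom_sub[OF assms] subgroup.one_closed by blast
  have "\<Psi> \<one> + \<Psi> \<one> - \<Psi> (\<one> \<otimes> \<one>) \<in> \<int>" using phomD[OF assms o o] .
  thus ?thesis by simp
qed

lemma phom_natpow: assumes h: "phom H \<Psi>" and a: "a \<in> H"
  shows "\<Psi> (a [^] (n::nat)) - of_nat n * \<Psi> a \<in> \<int>"
proof (induction n)
  case 0 then show ?case using phom_one[OF h] by simp
next
  case (Suc n)
  have sg: "subgroup H V" using phom_sub[OF h] .
  have an: "a [^] n \<in> H" using subgroup_int_pow_closed[OF sg a, of "int n"] by (simp add: int_pow_int)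
  have x: "\<Psi> (a [^] n) + \<Psi> a - \<Psi> (a [^] n \<otimes> a) \<in> \<int>" using phomD[OF h an a] .
  have eq: "\<Psi> (a [^] Suc n) - of_nat (Suc n) * \<Psi> a = (\<Psi> (a [^] n) - of_nat n * \<Psi> a) - (\<Psi> (a [^] n) + \<Psi> a - \<Psi> (a [^] n \<otimes> a))"
    by (simp add: algebra_simps)
  show ?case unfolding eq by (rule Ints_diff[OF Suc.IH x])
qed

lemma phom_inv: assumes h: "phom H \<Psi>" and a: "a \<in> H" shows "\<Psi> (inv a) + \<Psi> a \<in> \<int>"
proof -
  have sg: "subgroup H V" using phom_sub[OF h] .
  have ia: "inv a \<in> H" using subgroup.m_inv_closed[OF sg a] .
  have aV: "a \<in> carrier V" using subgroup.mem_carrier[OF sg a] .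
  have "\<Psi> (inv a) + \<Psi> a - \<Psi> (inv a \<otimes> a) \<in> \<int>" using phomD[OF h ia a] .
  then have "\<Psi> (inv a) + \<Psi> a - \<Psi> \<one> \<in> \<int>" using aV by simp
  from Ints_add[OF this phom_one[OF h]] show ?thesis by (simp only: diff_add_cancel)
qed

lemma phom_intpow: assumes h: "phom H \<Psi>" and a: "a \<in> H"
  shows "\<Psi> (a [^] (k::int)) - of_int k * \<Psi> a \<in> \<int>"
proof (cases "k \<ge> 0")
  case True
  define n where "n = nat k"
  have "k = int n" using True n_def by simp
  thus ?thesis using phom_natpow[OF h a, of n] by (simp add: int_pow_int)
next
  case False
  define n where "n = nat (- k)"
  have kn: "k = - int n" using False n_def by simp
  have sg: "subgroup H V" using phom_sub[OF h] .
  have aV: "a \<in> carrier V" using subgroup.mem_carrier[OF sg a] .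
  have an: "a [^] n \<in> H" using subgroup_int_pow_closed[OF sg a, of "int n"] by (simp add: int_pow_int)
  have e: "a [^] k = inv (a [^] n)" unfolding kn using aV by (simp add: int_pow_neg_int)
  have kk: "of_int k * \<Psi> a = - (of_nat n * \<Psi> a)" using kn by simp
  have eq: "\<Psi> (a [^] k) - of_int k * \<Psi> a = (\<Psi> (inv (a [^] n)) + \<Psi> (a [^] n)) - (\<Psi> (a [^] n) - of_nat n * \<Psi> a)"
    unfolding e kk by simp
  show ?thesis unfolding eq by (rule Ints_diff[OF phom_inv[OF h an] phom_natpow[OF h a, of n]])
qed

lemma phom_div: assumes h: "phom H \<Psi>" and a: "a \<in> H" and b: "b \<in> H"
  shows "\<Psi> (inv a \<otimes> b) - (\<Psi> b - \<Psi> a) \<in> \<int>"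
proof -
  have sg: "subgroup H V" using phom_sub[OF h] .
  have ia: "inv a \<in> H" using subgroup.m_inv_closed[OF sg a] .
  have eq: "\<Psi> (inv a \<otimes> b) - (\<Psi> b - \<Psi> a) = (\<Psi> (inv a) + \<Psi> a) - (\<Psi> (inv a) + \<Psi> b - \<Psi> (inv a \<otimes> b))"
    by simp
  show ?thesis unfolding eq by (rule Ints_diff[OF phom_inv[OF h a] phomD[OF h ia b]])
qed

lemma ext1:
  assumes h: "phom H \<Psi>" and v: "v \<in> carrier V"
    and q: "\<forall>k::int. v [^] k \<in> H \<longrightarrow> of_int k * q - \<Psi> (v [^] k) \<in> \<int>"
  shows "\<exists>\<Psi>'. phom {h \<otimes> v [^] (k::int) | h k. h \<in> H} \<Psi>' \<and> (\<forall>a\<in>H. \<Psi>' a = \<Psi> a) \<and> \<Psi>' v - q \<in> \<int>"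
proof -
  let ?H' = "{h \<otimes> v [^] (k::int) | h k. h \<in> H}"
  have sg: "subgroup H V" using phom_sub[OF h] .
  have HV: "x \<in> H \<Longrightarrow> x \<in> carrier V" for x by (rule subgroup.mem_carrier[OF sg])
  define val where "val h k = \<Psi> h + of_int k * q" for h and k :: int
  have cons: "val h k - val h' k' \<in> \<int>"
    if hH: "h \<in> H" "h' \<in> H" and e: "h \<otimes> v [^] k = h' \<otimes> v [^] k'" for h h' k k'
  proof -
    have hV: "h \<in> carrier V" "h' \<in> carrier V" using hH HV by auto
    have "v [^] (k - k') = v [^] k \<otimes> inv (v [^] k')" using v by (simp add: int_pow_diff)
    also have "\<dots> = inv h \<otimes> (h \<otimes> v [^] k) \<otimes> inv (v [^] k')" using hV v by (simp add: m_assoc[symmetric])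
    also have "\<dots> = inv h \<otimes> h'" using hV v e by (simp add: m_assoc)
    finally have ee: "v [^] (k - k') = inv h \<otimes> h'" .
    have inH: "v [^] (k - k') \<in> H" unfolding ee using subgroup.m_closed[OF sg subgroup.m_inv_closed[OF sg hH(1)] hH(2)] .
    have "of_int (k - k') * q - \<Psi> (v [^] (k - k')) \<in> \<int>" using q inH by blast
    then have x1: "of_int (k - k') * q - \<Psi> (inv h \<otimes> h') \<in> \<int>" unfolding ee .
    have x2: "\<Psi> (inv h \<otimes> h') - (\<Psi> h' - \<Psi> h) \<in> \<int>" using phom_div[OF h hH] .
    have eq: "val h k - val h' k' = (of_int (k - k') * q - \<Psi> (inv h \<otimes> h')) + (\<Psi> (inv h \<otimes> h') - (\<Psi> h' - \<Psi> h))"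
      unfolding val_def by (simp add: algebra_simps)
    show ?thesis unfolding eq by (rule Ints_add[OF x1 x2])
  qed
  define \<Psi>' where "\<Psi>' y = (if y \<in> H then \<Psi> y else
      (let hk = (SOME hk. fst hk \<in> H \<and> y = fst hk \<otimes> v [^] snd hk) in val (fst hk) (snd hk)))" for y
  have key: "\<Psi>' y - val h k \<in> \<int>" if hH: "h \<in> H" and y: "y = h \<otimes> v [^] k" for y h k
  proof (cases "y \<in> H")
    case True
    have e: "y \<otimes> v [^] (0::int) = h \<otimes> v [^] k" using True HV y by simp
    have "val y 0 - val h k \<in> \<int>" using cons[OF True hH e] .
    thus ?thesis using True unfolding \<Psi>'_def val_def by simp
  next
    case False
    have ex: "\<exists>hk::'a \<times> int. fst hk \<in> H \<and> y = fst hk \<otimes> v [^] snd hk"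
      using hH y by (intro exI[of _ "(h, k)"]) simp
    define hk where "hk = (SOME hk::'a \<times> int. fst hk \<in> H \<and> y = fst hk \<otimes> v [^] snd hk)"
    have hk: "fst hk \<in> H" "y = fst hk \<otimes> v [^] snd hk" using someI_ex[OF ex] unfolding hk_def by auto
    have "\<Psi>' y = val (fst hk) (snd hk)" using False unfolding \<Psi>'_def hk_def Let_def by simp
    moreover have "fst hk \<otimes> v [^] snd hk = h \<otimes> v [^] k" using hk(2) y by simp
    ultimately show ?thesis using cons[OF hk(1) hH] by simp
  qed
  have sg': "subgroup ?H' V"
  proof (rule subgroupI)
    show "?H' \<subseteq> carrier V" using HV v by auto
    have "\<one> \<otimes> v [^] (0::int) \<in> ?H'" using subgroup.one_closed[OF sg] by blast
    thus "?H' \<noteq> {}" by blast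
  next
    fix a assume "a \<in> ?H'"
    then obtain h and k :: int where hk: "h \<in> H" "a = h \<otimes> v [^] k" by auto
    have "inv a = inv h \<otimes> v [^] (- k)" using hk HV v by (simp add: inv_mult int_pow_neg m_comm)
    moreover have "inv h \<in> H" using subgroup.m_inv_closed[OF sg hk(1)] .
    ultimately show "inv a \<in> ?H'" by blast
  next
    fix a b assume "a \<in> ?H'" "b \<in> ?H'"
    then obtain h1 h2 and k1 k2 :: int where hk: "h1 \<in> H" "a = h1 \<otimes> v [^] k1" "h2 \<in> H" "b = h2 \<otimes> v [^] k2" by auto
    have "a \<otimes> b = (h1 \<otimes> h2) \<otimes> v [^] (k1 + k2)" using hk HV v by (simp add: int_pow_mult m_ac)
    moreover have "h1 \<otimes> h2 \<in> H" using subgroup.m_closed[OF sg hk(1) hk(3)] .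
    ultimately show "a \<otimes> b \<in> ?H'" by blast
  qed
  have hom': "\<Psi>' a + \<Psi>' b - \<Psi>' (a \<otimes> b) \<in> \<int>" if ab: "a \<in> ?H'" "b \<in> ?H'" for a b
  proof -
    obtain h1 h2 and k1 k2 :: int where hk: "h1 \<in> H" "a = h1 \<otimes> v [^] k1" "h2 \<in> H" "b = h2 \<otimes> v [^] k2" using ab by auto
    have ab: "a \<otimes> b = (h1 \<otimes> h2) \<otimes> v [^] (k1 + k2)" using hk HV v by (simp add: int_pow_mult m_ac)
    have h12: "h1 \<otimes> h2 \<in> H" using subgroup.m_closed[OF sg hk(1) hk(3)] .
    have x1: "\<Psi>' a - val h1 k1 \<in> \<int>" using key hk by blast
    have x2: "\<Psi>' b - val h2 k2 \<in> \<int>" using key hk by blast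
    have x3: "\<Psi>' (a \<otimes> b) - val (h1 \<otimes> h2) (k1 + k2) \<in> \<int>" using key[OF h12 ab] .
    have x4: "\<Psi> h1 + \<Psi> h2 - \<Psi> (h1 \<otimes> h2) \<in> \<int>" using phomD[OF h hk(1,3)] .
    have "\<Psi>' a + \<Psi>' b - \<Psi>' (a \<otimes> b) = (\<Psi>' a - val h1 k1) + (\<Psi>' b - val h2 k2) - (\<Psi>' (a \<otimes> b) - val (h1 \<otimes> h2) (k1 + k2))
       + (\<Psi> h1 + \<Psi> h2 - \<Psi> (h1 \<otimes> h2))"
      unfolding val_def by (simp add: algebra_simps)
    thus ?thesis by (simp only:) (rule Ints_add[OF Ints_diff[OF Ints_add[OF x1 x2] x3] x4])
  qed
  have "phom ?H' \<Psi>'" unfolding phom_def using sg' hom' by blast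
  moreover have "\<forall>a\<in>H. \<Psi>' a = \<Psi> a" unfolding \<Psi>'_def by simp
  moreover have "\<Psi>' v - q \<in> \<int>"
  proof -
    have "v = \<one> \<otimes> v [^] (1::int)" using v by simp
    then have "\<Psi>' v - val \<one> 1 \<in> \<int>" using key[OF subgroup.one_closed[OF sg]] by blast
    moreover have eq: "\<Psi>' v - q = (\<Psi>' v - val \<one> 1) + \<Psi> \<one>" unfolding val_def by simp
    ultimately show ?thesis using Ints_add phom_one[OF h] by (simp only: eq)
  qed
  ultimately show ?thesis by blast
qed


lemma qex:
  assumes h: "phom H \<Psi>" and v: "v \<in> carrier V"
  shows "\<exists>q. \<forall>k::int. v [^] k \<in> H \<longrightarrow> of_int k * q - \<Psi> (v [^] k) \<in> \<int>"
proof (cases "\<exists>d::nat. d > 0 \<and> v [^] d \<in> H")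
  case True
  have sg: "subgroup H V" using phom_sub[OF h] .
  define d where "d = (LEAST d::nat. d > 0 \<and> v [^] d \<in> H)"
  have d: "d > 0" "v [^] d \<in> H" using LeastI_ex[OF True] unfolding d_def by auto
  have dmin: "\<not> (r > 0 \<and> v [^] r \<in> H)" if "r < d" for r :: nat
  proof -
    have "r < (LEAST d::nat. d > 0 \<and> v [^] d \<in> H)" using that d_def by simp
    from not_less_Least[OF this] show ?thesis .
  qed
  define q where "q = \<Psi> (v [^] d) / of_nat d"
  have "of_int k * q - \<Psi> (v [^] k) \<in> \<int>" if k: "v [^] k \<in> H" for k :: int
  proof -
    define t where "t = k div int d"
    define r where "r = k mod int d"
    have kr: "k = int d * t + r" unfolding t_def r_def by simp
    have r0: "r \<ge> 0" "r < int d" unfolding r_def using d by auto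
    have vdV: "v [^] d \<in> carrier V" using v by simp
    have "v [^] r = v [^] k \<otimes> inv ((v [^] d) [^] t)"
    proof -
      have "(v [^] d) [^] t = v [^] (int d * t)" using v by (simp add: int_pow_pow int_pow_int[symmetric])
      moreover have "v [^] k = v [^] (int d * t) \<otimes> v [^] r" unfolding kr using v by (simp add: int_pow_mult)
      ultimately show ?thesis using v by (simp add: m_assoc m_comm[of "v [^] (int d * t)"])
    qed
    moreover have "(v [^] d) [^] t \<in> H" using subgroup_int_pow_closed[OF sg d(2)] .
    moreover have "v [^] k \<otimes> inv ((v [^] d) [^] t) \<in> H"
      using subgroup.m_closed[OF sg k subgroup.m_inv_closed[OF sg \<open>(v [^] d) [^] t \<in> H\<close>]] .
    ultimately have "v [^] r \<in> H" by simp
    moreover have "v [^] r = v [^] (nat r)" using int_pow_int[of V v "nat r"] r0 by simp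
    ultimately have "v [^] (nat r) \<in> H" by simp
    then have "r = 0" using dmin[of "nat r"] r0 by linarith
    then have kt: "k = int d * t" using kr by simp
    have e: "v [^] k = (v [^] d) [^] t" unfolding kt using v by (simp add: int_pow_pow int_pow_int[symmetric])
    have x: "\<Psi> ((v [^] d) [^] t) - of_int t * \<Psi> (v [^] d) \<in> \<int>" using phom_intpow[OF h d(2)] .
    have kq: "of_int k * q = of_int t * \<Psi> (v [^] d)" unfolding kt q_def using d by simp
    have eq: "of_int k * q - \<Psi> (v [^] k) = - (\<Psi> ((v [^] d) [^] t) - of_int t * \<Psi> (v [^] d))"
      unfolding kq e by simp
    show ?thesis unfolding eq by (rule Ints_minus[OF x])
  qed
  thus ?thesis by blast
next
  case False
  have "of_int k * 0 - \<Psi> (v [^] k) \<in> \<int>" if k: "v [^] k \<in> H" for k :: int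
  proof -
    have "k = 0"
    proof (rule ccontr)
      assume "k \<noteq> 0"
      then consider "k > 0" | "k < 0" by linarith
      then show False
      proof cases
        case 1
        have e: "v [^] k = v [^] (nat k)" using int_pow_int[of V v "nat k"] 1 by simp
        have "nat k > 0 \<and> v [^] (nat k) \<in> H" using e k 1 by simp
        thus False using False by blast
      next
        case 2
        have sg: "subgroup H V" using phom_sub[OF h] .
        have "inv (v [^] k) \<in> H" using subgroup.m_inv_closed[OF sg k] .
        moreover have "inv (v [^] k) = v [^] (nat (- k))"
        proof -
          have "k = - int (nat (- k))" using 2 by simp
          then have "v [^] k = inv (v [^] (nat (- k)))" using int_pow_neg_int[OF v, of "nat (- k)"] by simp
          thus ?thesis using v by simp
        qed
        ultimately have "nat (- k) > 0 \<and> v [^] (nat (- k)) \<in> H" using 2 by simp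
        thus False using False by blast
      qed
    qed
    thus ?thesis using Ints_minus[OF phom_one[OF h]] by simp
  qed
  thus ?thesis by blast
qed

definition gr :: "'a set \<Rightarrow> ('a \<Rightarrow> rat) \<Rightarrow> ('a \<times> rat) set" where
  "gr H \<Psi> = (\<lambda>a. (a, \<Psi> a)) ` H"

definition phomg :: "('a \<times> rat) set \<Rightarrow> bool" where
  "phomg R \<longleftrightarrow> (\<forall>a r s. (a, r) \<in> R \<longrightarrow> (a, s) \<in> R \<longrightarrow> r = s) \<and> subgroup (Domain R) V \<and>
     (\<forall>a b r s t. (a, r) \<in> R \<longrightarrow> (b, s) \<in> R \<longrightarrow> (a \<otimes> b, t) \<in> R \<longrightarrow> r + s - t \<in> \<int>)"

lemma Domain_gr: "Domain (gr H \<Psi>) = H" unfolding gr_def by force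

lemma gr_mem: "(a, r) \<in> gr H \<Psi> \<longleftrightarrow> a \<in> H \<and> r = \<Psi> a" unfolding gr_def by auto

lemma phom_g: assumes h: "phom H \<Psi>" shows "phomg (gr H \<Psi>)"
  unfolding phomg_def Domain_gr gr_mem
proof (intro conjI allI impI)
  show "subgroup H V" using phom_sub[OF h] .
  fix a b r s t assume "a \<in> H \<and> r = \<Psi> a" "b \<in> H \<and> s = \<Psi> b" "a \<otimes> b \<in> H \<and> t = \<Psi> (a \<otimes> b)"
  thus "r + s - t \<in> \<int>" using phomD[OF h] by blast
qed auto

definition fn :: "('a \<times> rat) set \<Rightarrow> 'a \<Rightarrow> rat" where "fn R a = (THE r. (a, r) \<in> R)"

lemma fn_eq: "phomg R \<Longrightarrow> (a, r) \<in> R \<Longrightarrow> fn R a = r"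
  unfolding fn_def phomg_def by blast

lemma g_phom: assumes g: "phomg R" shows "phom (Domain R) (fn R)"
  unfolding phom_def
proof (intro conjI ballI)
  show "subgroup (Domain R) V" using g unfolding phomg_def by blast
  fix a b assume a: "a \<in> Domain R" and b: "b \<in> Domain R"
  then obtain r s where rs: "(a, r) \<in> R" "(b, s) \<in> R" by auto
  have "a \<otimes> b \<in> Domain R" using subgroup.m_closed[OF \<open>subgroup (Domain R) V\<close> a b] .
  then obtain t where t: "(a \<otimes> b, t) \<in> R" by auto
  have "r + s - t \<in> \<int>" using g rs t unfolding phomg_def by blast
  thus "fn R a + fn R b - fn R (a \<otimes> b) \<in> \<int>" using fn_eq[OF g] rs t by simp
qed

lemma chain_union:
  assumes ne: "C \<noteq> {}" and ch: "\<And>R. R \<in> C \<Longrightarrow> phomg R"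
    and cmp: "\<And>R1 R2. R1 \<in> C \<Longrightarrow> R2 \<in> C \<Longrightarrow> R1 \<subseteq> R2 \<or> R2 \<subseteq> R1"
  shows "phomg (\<Union>C)"
proof -
  have two: "\<exists>R\<in>C. R1 \<subseteq> R \<and> R2 \<subseteq> R" if "R1 \<in> C" "R2 \<in> C" for R1 R2
    using cmp[OF that] that by blast
  have sv: "r = s" if ars: "(a, r) \<in> \<Union>C" "(a, s) \<in> \<Union>C" for a r s
  proof -
    obtain R1 R2 where "R1 \<in> C" "R2 \<in> C" "(a, r) \<in> R1" "(a, s) \<in> R2" using ars by auto
    then obtain R where "R \<in> C" "(a, r) \<in> R" "(a, s) \<in> R" using two by blast
    thus ?thesis using ch unfolding phomg_def by blast
  qed
  have sgC: "subgroup (Domain R) V" if "R \<in> C" for R using ch[OF that] unfolding phomg_def by blast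
  have sg: "subgroup (Domain (\<Union>C)) V"
  proof (rule subgroupI)
    show "Domain (\<Union>C) \<subseteq> carrier V"
    proof
      fix a assume "a \<in> Domain (\<Union>C)"
      then obtain R where R: "R \<in> C" "a \<in> Domain R" by blast
      show "a \<in> carrier V" using subgroup.mem_carrier[OF sgC[OF R(1)] R(2)] .
    qed
    obtain R where R: "R \<in> C" using ne by blast
    have "\<one> \<in> Domain R" using subgroup.one_closed[OF sgC[OF R]] .
    thus "Domain (\<Union>C) \<noteq> {}" using R by blast
  next
    fix a assume "a \<in> Domain (\<Union>C)"
    then obtain R where R: "R \<in> C" "a \<in> Domain R" by blast
    have "inv a \<in> Domain R" using subgroup.m_inv_closed[OF sgC[OF R(1)] R(2)] .
    thus "inv a \<in> Domain (\<Union>C)" using R by blast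
  next
    fix a b assume "a \<in> Domain (\<Union>C)" "b \<in> Domain (\<Union>C)"
    then obtain R1 R2 where R: "R1 \<in> C" "a \<in> Domain R1" "R2 \<in> C" "b \<in> Domain R2" by blast
    then obtain R where R': "R \<in> C" "R1 \<subseteq> R" "R2 \<subseteq> R" using two by blast
    have "a \<in> Domain R" "b \<in> Domain R" using R R' by auto
    then have "a \<otimes> b \<in> Domain R" using subgroup.m_closed[OF sgC[OF R'(1)]] by blast
    thus "a \<otimes> b \<in> Domain (\<Union>C)" using R' by blast
  qed
  have hm: "r + s - t \<in> \<int>" if abr: "(a, r) \<in> \<Union>C" "(b, s) \<in> \<Union>C" "(a \<otimes> b, t) \<in> \<Union>C" for a b r s t
  proof -
    obtain R1 R2 R3 where R: "R1 \<in> C" "R2 \<in> C" "R3 \<in> C" "(a, r) \<in> R1" "(b, s) \<in> R2" "(a \<otimes> b, t) \<in> R3"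
      using abr by auto
    then obtain R12 where R12: "R12 \<in> C" "R1 \<subseteq> R12" "R2 \<subseteq> R12" using two by blast
    then obtain R where R': "R \<in> C" "R12 \<subseteq> R" "R3 \<subseteq> R" using two R by blast
    have "(a, r) \<in> R" "(b, s) \<in> R" "(a \<otimes> b, t) \<in> R" using R R12 R' by auto
    thus ?thesis using ch[OF R'(1)] unfolding phomg_def by blast
  qed
  show ?thesis unfolding phomg_def using sv sg hm by blast
qed

lemma total_ext:
  assumes g0: "phomg R0"
  shows "\<exists>\<Phi>. phom (carrier V) \<Phi> \<and> (\<forall>a r. (a, r) \<in> R0 \<longrightarrow> \<Phi> a = r)"
proof -
  define A where "A = {R. phomg R \<and> R0 \<subseteq> R}"
  have "A \<noteq> {}" using g0 unfolding A_def by blast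
  moreover have "\<Union>C \<in> A" if "C \<noteq> {}" "subset.chain A C" for C
  proof -
    have CA: "C \<subseteq> A" and cmp: "\<And>R1 R2. R1 \<in> C \<Longrightarrow> R2 \<in> C \<Longrightarrow> R1 \<subseteq> R2 \<or> R2 \<subseteq> R1"
      using that(2) unfolding subset_chain_def by auto
    have "phomg (\<Union>C)" using chain_union[OF that(1)] CA cmp unfolding A_def by blast
    moreover have "R0 \<subseteq> \<Union>C" using that(1) CA unfolding A_def by blast
    ultimately show ?thesis unfolding A_def by blast
  qed
  ultimately obtain M where M: "M \<in> A" and max: "\<And>R. R \<in> A \<Longrightarrow> M \<subseteq> R \<Longrightarrow> R = M"
    using subset_Zorn_nonempty[of A] by blast
  have gM: "phomg M" and R0M: "R0 \<subseteq> M" using M unfolding A_def by auto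
  have hM: "phom (Domain M) (fn M)" using g_phom[OF gM] .
  have sgM: "subgroup (Domain M) V" using phom_sub[OF hM] .
  have dom: "Domain M = carrier V"
  proof (rule ccontr)
    assume "Domain M \<noteq> carrier V"
    moreover have "Domain M \<subseteq> carrier V" using subgroup.subset[OF sgM] .
    ultimately obtain v where v: "v \<in> carrier V" "v \<notin> Domain M" by blast
    obtain q where q: "\<forall>k::int. v [^] k \<in> Domain M \<longrightarrow> of_int k * q - fn M (v [^] k) \<in> \<int>"
      using qex[OF hM v(1)] by blast
    obtain \<Psi>' where \<Psi>': "phom {h \<otimes> v [^] (k::int) | h k. h \<in> Domain M} \<Psi>'" "\<forall>a\<in>Domain M. \<Psi>' a = fn M a"
      using ext1[OF hM v(1) q] by blast
    let ?H' = "{h \<otimes> v [^] (k::int) | h k. h \<in> Domain M}"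
    have "M \<subseteq> gr ?H' \<Psi>'"
    proof
      fix x assume x: "x \<in> M"
      obtain a r where ar: "x = (a, r)" by (cases x)
      have a: "a \<in> Domain M" using x ar by auto
      have "a = a \<otimes> v [^] (0::int)" using subgroup.mem_carrier[OF sgM a] by simp
      then have "a \<in> ?H'" using a by blast
      moreover have "r = \<Psi>' a" using \<Psi>'(2) a fn_eq[OF gM] x ar by auto
      ultimately show "x \<in> gr ?H' \<Psi>'" unfolding ar gr_mem by simp
    qed
    moreover have "gr ?H' \<Psi>' \<in> A" unfolding A_def using phom_g[OF \<Psi>'(1)] R0M calculation by blast
    ultimately have eqM: "gr ?H' \<Psi>' = M" using max by blast
    have vH: "v \<in> ?H'"
    proof -
      have "\<one> \<in> Domain M" using subgroup.one_closed[OF sgM] .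
      moreover have "v = \<one> \<otimes> v [^] (1::int)" using v by simp
      ultimately show ?thesis by blast
    qed
    have "v \<in> Domain (gr ?H' \<Psi>')" unfolding Domain_gr using vH .
    then have "v \<in> Domain M" unfolding eqM .
    thus False using v by blast
  qed
  have "\<forall>a r. (a, r) \<in> R0 \<longrightarrow> fn M a = r" using R0M fn_eq[OF gM] by blast
  thus ?thesis using hM dom by auto
qed


definition W :: "nat \<Rightarrow> 'a set" where "W n = {x \<in> N n. x [^] p = \<one>}"

lemma W_mono: "n \<le> n' \<Longrightarrow> W n' \<subseteq> W n"
  unfolding W_def using N_mono by blast

lemma W_carr: "x \<in> W n \<Longrightarrow> x \<in> carrier V"
  unfolding W_def using N_carr by blast

lemma ord_p:
  assumes x: "x \<in> carrier V" and xp: "x [^] p = \<one>" and x1: "x \<noteq> \<one>"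
  shows "x [^] (k::int) = \<one> \<longleftrightarrow> int p dvd k"
proof -
  have "ord x dvd p" using pow_eq_id[OF x] xp by blast
  moreover have "ord x \<noteq> 1"
  proof
    assume "ord x = 1"
    then have "x [^] (1::nat) = \<one>" using pow_eq_id[OF x, of 1] by simp
    thus False using x x1 by simp
  qed
  ultimately have "ord x = p" using prime_p unfolding prime_nat_iff by blast
  thus ?thesis using int_pow_eq_id[OF x] by simp
qed

lemma notint: assumes "r - 1 / of_nat p \<in> \<int>" shows "(r::rat) \<notin> \<int>"
proof
  assume r: "r \<in> \<int>"
  have "1 / of_nat p = r - (r - 1 / of_nat p)" by simp
  also have "\<dots> \<in> \<int>" using r assms by simp
  finally obtain z where z: "1 / (of_nat p :: rat) = of_int z" by (auto elim: Ints_cases)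
  have "(0::rat) < 1 / of_nat p" using p_gt1 by simp
  moreover have "1 / of_nat p < (1::rat)" using p_gt1 by simp
  ultimately have "0 < z" "z < 1" unfolding z by simp_all
  thus False by simp
qed

lemma ext_x:
  assumes h: "phom H \<Psi>" and x: "x \<in> W n0" and x1: "x \<noteq> \<one>"
    and disj: "\<forall>h\<in>H. h \<in> W n0 \<longrightarrow> h = \<one>"
  shows "\<exists>\<Psi>'. phom {h \<otimes> x [^] (k::int) | h k. h \<in> H} \<Psi>' \<and> (\<forall>a\<in>H. \<Psi>' a = \<Psi> a) \<and> \<Psi>' x \<notin> \<int>"
proof -
  have xV: "x \<in> carrier V" using W_carr x by blast
  have xp: "x [^] p = \<one>" and xN: "x \<in> N n0" using x unfolding W_def by auto
  have "of_int k * (1 / of_nat p) - \<Psi> (x [^] k) \<in> \<int>" if k: "x [^] k \<in> H" for k :: int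
  proof (cases "x [^] k = \<one>")
    case True
    then have "int p dvd k" using ord_p[OF xV xp x1] by blast
    then obtain t where t: "k = int p * t" by (auto elim: dvdE)
    have "of_int k * (1 / of_nat p) = (of_int t :: rat)" unfolding t using p_gt1 by simp
    thus ?thesis using True phom_one[OF h] by simp
  next
    case False
    have "x [^] k \<in> N n0" using N_ipow[OF xN] .
    moreover have "(x [^] k) [^] p = \<one>"
    proof -
      have "(x [^] k) [^] p = (x [^] k) [^] (int p)" by (simp add: int_pow_int)
      also have "\<dots> = x [^] (k * int p)" using xV by (simp add: int_pow_pow)
      also have "\<dots> = (x [^] (int p)) [^] k" using xV by (simp add: int_pow_pow mult.commute)
      also have "\<dots> = \<one>" using xp by (simp add: int_pow_int)
      finally show ?thesis .
    qed
    ultimately have "x [^] k \<in> W n0" unfolding W_def by simp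
    thus ?thesis using disj k False by blast
  qed
  then obtain \<Psi>' where \<Psi>': "phom {h \<otimes> x [^] (k::int) | h k. h \<in> H} \<Psi>'" "\<forall>a\<in>H. \<Psi>' a = \<Psi> a"
    "\<Psi>' x - 1 / of_nat p \<in> \<int>"
    using ext1[OF h xV] by blast
  thus ?thesis using notint by blast
qed

lemma phom_triv: "phom {\<one>} (\<lambda>_. 0)"
  unfolding phom_def using triv_subgroup by simp

lemma finite_ext:
  assumes fin: "finite H" and x: "x \<in> carrier V" and xp: "x [^] p = \<one>" and HV: "H \<subseteq> carrier V"
  shows "finite {h \<otimes> x [^] (k::int) | h k. h \<in> H}"
proof -
  have "{h \<otimes> x [^] (k::int) | h k. h \<in> H} \<subseteq> (\<lambda>(h, i). h \<otimes> x [^] (i::nat)) ` (H \<times> {..<p})"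
  proof
    fix y assume "y \<in> {h \<otimes> x [^] (k::int) | h k. h \<in> H}"
    then obtain h and k :: int where hk: "h \<in> H" "y = h \<otimes> x [^] k" by auto
    define r where "r = k mod int p"
    have r0: "r \<ge> 0" "r < int p" unfolding r_def using p_gt1 by auto
    have "x [^] k = x [^] (int p * (k div int p) + r)" unfolding r_def by simp
    also have "\<dots> = (x [^] (int p)) [^] (k div int p) \<otimes> x [^] r" using x by (simp add: int_pow_mult int_pow_pow)
    also have "\<dots> = x [^] r" using x xp by (simp add: int_pow_int)
    also have "\<dots> = x [^] (nat r)" using int_pow_int[of V x "nat r"] r0 by simp
    finally have "y = h \<otimes> x [^] (nat r)" using hk by simp
    moreover have "nat r < p" using r0 by simp
    ultimately show "y \<in> (\<lambda>(h, i). h \<otimes> x [^] (i::nat)) ` (H \<times> {..<p})" using hk by force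
  qed
  moreover have "finite ((\<lambda>(h, i). h \<otimes> x [^] (i::nat)) ` (H \<times> {..<p}))" using fin by simp
  ultimately show ?thesis using finite_subset by blast
qed

definition rel :: "nat \<Rightarrow> 'a set \<times> ('a \<Rightarrow> rat) \<Rightarrow> 'a set \<times> ('a \<Rightarrow> rat) \<Rightarrow> bool" where
  "rel j P P' \<longleftrightarrow> phom (fst P') (snd P') \<and> finite (fst P') \<and> fst P \<subseteq> fst P' \<and>
     (\<forall>a\<in>fst P. snd P' a = snd P a) \<and> (\<exists>x\<in>W j. x \<in> fst P' \<and> snd P' x \<notin> \<int>)"

primrec st :: "nat \<Rightarrow> 'a set \<times> ('a \<Rightarrow> rat)" where
  "st 0 = ({\<one>}, \<lambda>_. 0)"
| "st (Suc j) = (SOME P'. rel j (st j) P')"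

lemma step:
  assumes unb: "\<forall>n. \<exists>x\<in>W n. x \<noteq> \<one>" and B: "\<forall>x. (\<forall>n. x \<in> W n) \<longrightarrow> x = \<one>"
    and h: "phom H \<Psi>" and fin: "finite H"
  shows "\<exists>P'. rel j (H, \<Psi>) P'"
proof -
  have ex: "\<exists>n. h \<notin> W n" if "h \<in> H - {\<one>}" for h using B that by blast
  define nf where "nf h = (SOME n. h \<notin> W n)" for h
  have nf: "h \<notin> W (nf h)" if "h \<in> H - {\<one>}" for h unfolding nf_def using someI_ex[OF ex[OF that]] .
  define n0 where "n0 = Max (insert j (nf ` (H - {\<one>})))"
  have finI: "finite (insert j (nf ` (H - {\<one>})))" using fin by simp
  have jn0: "j \<le> n0" unfolding n0_def using Max_ge[OF finI] by simp
  have disj: "\<forall>h\<in>H. h \<in> W n0 \<longrightarrow> h = \<one>"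
  proof (intro ballI impI)
    fix h assume hH: "h \<in> H" and hW: "h \<in> W n0"
    show "h = \<one>"
    proof (rule ccontr)
      assume "h \<noteq> \<one>"
      then have hh: "h \<in> H - {\<one>}" using hH by simp
      have "nf h \<le> n0" unfolding n0_def using Max_ge[OF finI] hh by simp
      then have "h \<in> W (nf h)" using W_mono hW by blast
      thus False using nf[OF hh] by simp
    qed
  qed
  obtain x where x: "x \<in> W n0" "x \<noteq> \<one>" using unb by blast
  have xV: "x \<in> carrier V" and xp: "x [^] p = \<one>" using x W_carr unfolding W_def by auto
  obtain \<Psi>' where \<Psi>': "phom {h \<otimes> x [^] (k::int) | h k. h \<in> H} \<Psi>'" "\<forall>a\<in>H. \<Psi>' a = \<Psi> a" "\<Psi>' x \<notin> \<int>"
    using ext_x[OF h x disj] by blast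
  let ?H' = "{h \<otimes> x [^] (k::int) | h k. h \<in> H}"
  have sg: "subgroup H V" using phom_sub[OF h] .
  have HV: "H \<subseteq> carrier V" using subgroup.subset[OF sg] .
  have "H \<subseteq> ?H'"
  proof
    fix a assume a: "a \<in> H"
    then have "a = a \<otimes> x [^] (0::int)" using HV by auto
    thus "a \<in> ?H'" using a by blast
  qed
  moreover have "x \<in> ?H'"
  proof -
    have "x = \<one> \<otimes> x [^] (1::int)" using xV by simp
    thus ?thesis using subgroup.one_closed[OF sg] by blast
  qed
  moreover have "x \<in> W j" using W_mono[OF jn0] x by blast
  moreover have "finite ?H'" using finite_ext[OF fin xV xp HV] .
  ultimately have "rel j (H, \<Psi>) (?H', \<Psi>')" unfolding rel_def using \<Psi>' by auto
  thus ?thesis by blast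
qed

lemma psi_exists:
  assumes unb: "\<forall>n. \<exists>x\<in>W n. x \<noteq> \<one>"
  shows "\<exists>\<Phi>. phom (carrier V) \<Phi> \<and> (\<forall>n. \<exists>x\<in>W n. \<Phi> x \<notin> \<int>)"
proof (cases "\<exists>x. x \<noteq> \<one> \<and> (\<forall>n. x \<in> W n)")
  case True
  then obtain x where x: "x \<noteq> \<one>" "\<forall>n. x \<in> W n" by blast
  have xV: "x \<in> carrier V" using W_carr x by blast
  obtain \<Psi>' where \<Psi>': "phom {h \<otimes> x [^] (k::int) | h k. h \<in> {\<one>}} \<Psi>'" "\<Psi>' x \<notin> \<int>"
    using ext_x[OF phom_triv x(2)[rule_format, of 0] x(1)] by blast
  obtain \<Phi> where \<Phi>: "phom (carrier V) \<Phi>" "\<forall>a r. (a, r) \<in> gr {h \<otimes> x [^] (k::int) | h k. h \<in> {\<one>}} \<Psi>' \<longrightarrow> \<Phi> a = r"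
    using total_ext[OF phom_g[OF \<Psi>'(1)]] by blast
  have "x \<in> {h \<otimes> x [^] (k::int) | h k. h \<in> {\<one>}}"
  proof -
    have "x = \<one> \<otimes> x [^] (1::int)" using xV by simp
    thus ?thesis by blast
  qed
  then have "\<Phi> x = \<Psi>' x" using \<Phi>(2) unfolding gr_mem by blast
  then have "\<forall>n. \<exists>x\<in>W n. \<Phi> x \<notin> \<int>" using \<Psi>'(2) x(2) by metis
  thus ?thesis using \<Phi>(1) by blast
next
  case False
  then have B: "\<forall>x. (\<forall>n. x \<in> W n) \<longrightarrow> x = \<one>" by blast
  have inv: "phom (fst (st j)) (snd (st j)) \<and> finite (fst (st j))" for j
  proof (induction j)
    case 0 then show ?case using phom_triv by simp
  next
    case (Suc j)
    have "\<exists>P'. rel j (st j) P'" using step[OF unb B, of "fst (st j)" "snd (st j)" j] Suc by simp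
    then have "rel j (st j) (st (Suc j))" unfolding st.simps by (rule someI_ex)
    thus ?case unfolding rel_def by blast
  qed
  have rl: "rel j (st j) (st (Suc j))" for j
  proof -
    have "\<exists>P'. rel j (st j) P'" using step[OF unb B, of "fst (st j)" "snd (st j)" j] inv[of j] by simp
    thus ?thesis unfolding st.simps by (rule someI_ex)
  qed
  define G where "G j = gr (fst (st j)) (snd (st j))" for j
  have Gsuc: "G j \<subseteq> G (Suc j)" for j
    using rl[of j] unfolding G_def rel_def gr_def by auto
  have Gmono: "i \<le> j \<Longrightarrow> G i \<subseteq> G j" for i j using lift_Suc_mono_le[of G, OF Gsuc] by blast
  have "phomg (\<Union>(range G))"
  proof (rule chain_union)
    show "range G \<noteq> {}" by simp
    show "\<And>R. R \<in> range G \<Longrightarrow> phomg R" unfolding G_def using inv phom_g by auto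
    show "\<And>R1 R2. R1 \<in> range G \<Longrightarrow> R2 \<in> range G \<Longrightarrow> R1 \<subseteq> R2 \<or> R2 \<subseteq> R1"
      using Gmono by (metis image_iff nle_le)
  qed
  then obtain \<Phi> where \<Phi>: "phom (carrier V) \<Phi>" "\<forall>a r. (a, r) \<in> \<Union>(range G) \<longrightarrow> \<Phi> a = r"
    using total_ext by blast
  have "\<exists>x\<in>W n. \<Phi> x \<notin> \<int>" for n
  proof -
    obtain x where x: "x \<in> W n" "x \<in> fst (st (Suc n))" "snd (st (Suc n)) x \<notin> \<int>"
      using rl[of n] unfolding rel_def by blast
    have "(x, snd (st (Suc n)) x) \<in> G (Suc n)" unfolding G_def gr_mem using x by simp
    then have "\<Phi> x = snd (st (Suc n)) x" using \<Phi>(2) by blast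
    then have "\<Phi> x \<notin> \<int>" using x(3) by simp
    thus ?thesis using x(1) by (rule bexI)
  qed
  thus ?thesis using \<Phi>(1) by blast
qed


lemma unb_of:
  assumes nb: "\<not> p_torsion_bounded V p"
  shows "\<forall>n. \<exists>x\<in>W n. x \<noteq> \<one>"
proof
  fix n
  obtain x where x: "x \<in> carrier V" "\<exists>m. x [^] (p ^ m) = \<one>" "x [^] (p ^ n) \<noteq> \<one>"
    using nb unfolding p_torsion_bounded_def by blast
  define m0 where "m0 = (LEAST m. x [^] (p ^ m) = \<one>)"
  have m0: "x [^] (p ^ m0) = \<one>" unfolding m0_def using LeastI_ex[OF x(2)] .
  have pw: "x [^] (p ^ b) = (x [^] (p ^ a)) [^] (p ^ (b - a))" if "a \<le> b" for a b
  proof -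
    have "p ^ a * p ^ (b - a) = p ^ b" using that by (simp add: power_add[symmetric])
    thus ?thesis using x(1) by (simp add: nat_pow_pow)
  qed
  have gt: "n < m0"
  proof (rule ccontr)
    assume "\<not> n < m0"
    then have "x [^] (p ^ n) = \<one>" using pw[of m0 n] m0 by simp
    thus False using x(3) by simp
  qed
  define y where "y = x [^] (p ^ (m0 - 1))"
  have "y [^] p = x [^] (p ^ (m0 - 1) * p)" unfolding y_def using x(1) by (simp add: nat_pow_pow)
  also have "p ^ (m0 - 1) * p = p ^ m0" using gt by (metis Suc_diff_1 gr_implies_not0 not_gr_zero power_Suc2)
  finally have yp: "y [^] p = \<one>" using m0 by simp
  have y1: "y \<noteq> \<one>"
  proof
    assume "y = \<one>"
    then have "x [^] (p ^ (m0 - 1)) = \<one>" unfolding y_def .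
    moreover have "m0 - 1 < m0" using gt by simp
    ultimately show False using not_less_Least[of "m0 - 1" "\<lambda>m. x [^] (p ^ m) = \<one>"] m0_def by blast
  qed
  have "y = (x [^] (p ^ (m0 - 1 - n))) [^] (p ^ n)"
  proof -
    have "p ^ (m0 - 1 - n) * p ^ n = p ^ (m0 - 1)" using gt by (simp add: power_add[symmetric])
    thus ?thesis unfolding y_def using x(1) by (simp add: nat_pow_pow)
  qed
  then have "y \<in> N n" using x(1) ppow_I by simp
  thus "\<exists>x\<in>W n. x \<noteq> \<one>" using yp y1 unfolding W_def by blast
qed

lemma nonsurj:
  assumes nb: "\<not> p_torsion_bounded V p"
  shows "\<exists>f\<in>cocycles V p. \<forall>n F. F \<in> cocycles (Q n) p \<longrightarrow> (f, pullback V (pr n) F) \<notin> ext_rel V p"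
proof -
  obtain \<Phi> where \<Phi>: "phom (carrier V) \<Phi>" "\<forall>n. \<exists>x\<in>W n. \<Phi> x \<notin> \<int>"
    using psi_exists[OF unb_of[OF nb]] by blast
  define f where "f a b = (if a \<in> carrier V \<and> b \<in> carrier V then \<lfloor>\<Phi> a + \<Phi> b - \<Phi> (a \<otimes> b)\<rfloor> else 0)" for a b
  have fval: "(of_int (f a b) :: rat) = \<Phi> a + \<Phi> b - \<Phi> (a \<otimes> b)" if "a \<in> carrier V" "b \<in> carrier V" for a b
  proof -
    have "\<Phi> a + \<Phi> b - \<Phi> (a \<otimes> b) \<in> \<int>" using phomD[OF \<Phi>(1) that] .
    then obtain z where z: "\<Phi> a + \<Phi> b - \<Phi> (a \<otimes> b) = of_int z" by (auto elim: Ints_cases)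
    show ?thesis unfolding f_def z using that by simp
  qed
  have fc: "f \<in> cocycles V p"
    unfolding cocycles_def mem_Collect_eq
  proof (intro conjI allI impI ballI)
    fix a b assume "a \<notin> carrier V \<or> b \<notin> carrier V" thus "f a b = 0" unfolding f_def by auto
  next
    fix a b assume "a \<in> carrier V" "b \<in> carrier V"
    then have "f a b = f b a" unfolding f_def by (simp add: m_comm add.commute)
    thus "[f a b = f b a] (mod int p)" by simp
  next
    fix a b c assume abc: "a \<in> carrier V" "b \<in> carrier V" "c \<in> carrier V"
    have "(of_int (f a b + f (a \<otimes> b) c) :: rat) = of_int (f b c + f a (b \<otimes> c))"
      using abc by (simp add: fval m_assoc)
    then have "f a b + f (a \<otimes> b) c = f b c + f a (b \<otimes> c)" by (simp only: of_int_eq_iff)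
    thus "[f a b + f (a \<otimes> b) c = f b c + f a (b \<otimes> c)] (mod int p)" by simp
  qed
  have "(f, pullback V (pr n) F) \<notin> ext_rel V p" if F: "F \<in> cocycles (Q n) p" for n F
  proof
    assume "(f, pullback V (pr n) F) \<in> ext_rel V p"
    then obtain g where g: "\<forall>a\<in>carrier V. \<forall>b\<in>carrier V.
      [f a b - pullback V (pr n) F a b = g a + g b - g (a \<otimes> b)] (mod int p)"
      unfolding ext_rel_def coboundary_def by auto
    obtain x where x: "x \<in> W n" "\<Phi> x \<notin> \<int>" using \<Phi>(2) by blast
    have xV: "x \<in> carrier V" and xN: "x \<in> N n" and xp: "x [^] p = \<one>" using x W_carr unfolding W_def by auto
    define c where "c = F (N n) (N n)"
    have hi: "int p dvd ((f x (x [^] i) - c) - (g x + g (x [^] i) - g (x [^] Suc i)))" for i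
    proof -
      have xi: "x [^] i \<in> carrier V" "x [^] i \<in> N n" using xV N_pow[OF xN] by auto
      have "pullback V (pr n) F x (x [^] i) = c"
        unfolding pullback_def c_def using xV xi pr_N[OF xN] pr_N[OF xi(2)] by simp
      moreover have "x \<otimes> x [^] i = x [^] Suc i" using xV by (simp add: m_comm)
      ultimately show ?thesis using g xV xi(1) unfolding cong_iff_dvd_diff by metis
    qed
    have "int p dvd (\<Sum>i<p. (f x (x [^] i) - c) - (g x + g (x [^] i) - g (x [^] Suc i)))"
      by (rule dvd_sum) (rule hi)
    moreover have "(\<Sum>i<p. (f x (x [^] i) - c) - (g x + g (x [^] i) - g (x [^] Suc i)))
       = (\<Sum>i<p. f x (x [^] i)) - int p * c - int p * g x + (\<Sum>i<p. g (x [^] Suc i) - g (x [^] i))"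
      by (simp add: sum_subtractf sum.distrib algebra_simps)
    moreover have "(\<Sum>i<p. g (x [^] Suc i) - g (x [^] i)) = 0"
      using sum_lessThan_telescope[of "\<lambda>i. g (x [^] i)" p] xp by simp
    ultimately have "int p dvd ((\<Sum>i<p. f x (x [^] i)) - int p * c - int p * g x)" by simp
    then have "int p dvd (\<Sum>i<p. f x (x [^] i))"
      by (metis dvd_add dvd_triv_left diff_add_cancel)
    then obtain z where z: "(\<Sum>i<p. f x (x [^] i)) = int p * z" by (auto elim: dvdE)
    have "(of_int (\<Sum>i<p. f x (x [^] i)) :: rat) = (\<Sum>i<p. \<Phi> x + \<Phi> (x [^] i) - \<Phi> (x [^] Suc i))"
      using xV by (simp add: fval m_comm)
    also have "\<dots> = of_nat p * \<Phi> x - (\<Sum>i<p. \<Phi> (x [^] Suc i) - \<Phi> (x [^] i))"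
      by (simp add: sum_subtractf sum.distrib algebra_simps)
    also have "(\<Sum>i<p. \<Phi> (x [^] Suc i) - \<Phi> (x [^] i)) = 0"
      using sum_lessThan_telescope[of "\<lambda>i. \<Phi> (x [^] i)" p] xp by simp
    finally have e1: "(of_int (\<Sum>i<p. f x (x [^] i)) :: rat) = of_nat p * \<Phi> x" by simp
    have "(of_nat p :: rat) * of_int z = of_nat p * \<Phi> x" using e1 unfolding z by simp
    then have "of_int z = \<Phi> x" using p_gt1 by simp
    thus False using x(2) Ints_of_int by metis
  qed
  thus ?thesis using fc by blast
qed

end


theorem mainTheorem10:
  fixes V :: "('a, 'b) monoid_scheme" and p :: nat
  assumes "Factorial_Ring.prime p" and "comm_group V"
  shows "p_torsion_bounded V p \<longleftrightarrow> bij_betw (canon_map V p) (colim_Ext1 V p) (Ext1 V p)"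
proof -
  interpret P: pc V p using assms by (simp add: pc_def pc_axioms_def)
  have eqE: "equiv (cocycles V p) (ext_rel V p)" by (rule ext_equiv)
  have eqC: "equiv P.SIG (colim_rel V p)" by (rule P.colim_equiv)
  have cls: "\<exists>n F. F \<in> cocycles (P.Q n) p \<and> S = colim_rel V p `` {(n, F)}" if "S \<in> colim_Ext1 V p" for S
    using that unfolding colim_Ext1_def by (auto elim!: quotientE)
  have into: "canon_map V p ` colim_Ext1 V p \<subseteq> Ext1 V p"
  proof
    fix E assume "E \<in> canon_map V p ` colim_Ext1 V p"
    then obtain S where S: "S \<in> colim_Ext1 V p" "E = canon_map V p S" by blast
    then obtain n F where F: "F \<in> cocycles (P.Q n) p" "S = colim_rel V p `` {(n, F)}" using cls by blast
    have "E = ext_rel V p `` {pullback V (P.pr n) F}" using S F P.canon_class by simp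
    thus "E \<in> Ext1 V p" unfolding Ext1_def using P.pb_pr_coc[OF F(1)] by (simp add: quotientI)
  qed
  have inj: "inj_on (canon_map V p) (colim_Ext1 V p)"
  proof (rule inj_onI)
    fix S1 S2 assume S1: "S1 \<in> colim_Ext1 V p" and S2: "S2 \<in> colim_Ext1 V p"
      and e: "canon_map V p S1 = canon_map V p S2"
    obtain n F where F: "F \<in> cocycles (P.Q n) p" "S1 = colim_rel V p `` {(n, F)}" using cls[OF S1] by blast
    obtain m G where G: "G \<in> cocycles (P.Q m) p" "S2 = colim_rel V p `` {(m, G)}" using cls[OF S2] by blast
    have "ext_rel V p `` {pullback V (P.pr n) F} = ext_rel V p `` {pullback V (P.pr m) G}"
      using e F G P.canon_class by simp
    then have "(pullback V (P.pr n) F, pullback V (P.pr m) G) \<in> ext_rel V p"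
      using eq_equiv_class_iff[OF eqE P.pb_pr_coc[OF F(1)] P.pb_pr_coc[OF G(1)]] by simp
    then have "((n, F), (m, G)) \<in> colim_rel V p" using P.inj_key F(1) G(1) by blast
    thus "S1 = S2" using F G equiv_class_eq[OF eqC] by simp
  qed
  show ?thesis
  proof
    assume bd: "p_torsion_bounded V p"
    then obtain k0 where k0: "\<forall>x\<in>carrier V. (\<exists>m. x [^]\<^bsub>V\<^esub> (p ^ m) = \<one>\<^bsub>V\<^esub>) \<longrightarrow> x [^]\<^bsub>V\<^esub> (p ^ k0) = \<one>\<^bsub>V\<^esub>"
      unfolding p_torsion_bounded_def by blast
    define k where "k = Suc k0"
    have bk: "\<forall>x\<in>carrier V. (\<exists>m. x [^]\<^bsub>V\<^esub> (p ^ m) = \<one>\<^bsub>V\<^esub>) \<longrightarrow> x [^]\<^bsub>V\<^esub> (p ^ k) = \<one>\<^bsub>V\<^esub>"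
    proof (intro ballI impI)
      fix x assume x: "x \<in> carrier V" "\<exists>m. x [^]\<^bsub>V\<^esub> (p ^ m) = \<one>\<^bsub>V\<^esub>"
      then have "x [^]\<^bsub>V\<^esub> (p ^ k0) = \<one>\<^bsub>V\<^esub>" using k0 by blast
      moreover have "x [^]\<^bsub>V\<^esub> (p ^ k) = (x [^]\<^bsub>V\<^esub> (p ^ k0)) [^]\<^bsub>V\<^esub> p"
        unfolding k_def using x(1) by (simp add: P.nat_pow_pow mult.commute)
      ultimately show "x [^]\<^bsub>V\<^esub> (p ^ k) = \<one>\<^bsub>V\<^esub>" by simp
    qed
    have "Ext1 V p \<subseteq> canon_map V p ` colim_Ext1 V p"
    proof
      fix E assume "E \<in> Ext1 V p"
      then obtain f where f: "f \<in> cocycles V p" "E = ext_rel V p `` {f}"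
        unfolding Ext1_def by (auto elim!: quotientE)
      obtain F where F: "F \<in> cocycles (P.Q (2 * k)) p" "(f, pullback V (P.pr (2 * k)) F) \<in> ext_rel V p"
        using P.surj_key[OF bk _ f(1)] k_def by auto
      let ?S = "colim_rel V p `` {(2 * k, F)}"
      have "?S \<in> colim_Ext1 V p" unfolding colim_Ext1_def using F(1) by (auto intro: quotientI)
      moreover have "canon_map V p ?S = E"
        using P.canon_class[OF F(1)] f(2) equiv_class_eq[OF eqE F(2)] by simp
      ultimately show "E \<in> canon_map V p ` colim_Ext1 V p" by blast
    qed
    thus "bij_betw (canon_map V p) (colim_Ext1 V p) (Ext1 V p)"
      unfolding bij_betw_def using inj into by blast
  next
    assume bij: "bij_betw (canon_map V p) (colim_Ext1 V p) (Ext1 V p)"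
    show "p_torsion_bounded V p"
    proof (rule ccontr)
      assume nb: "\<not> p_torsion_bounded V p"
      obtain f where f: "f \<in> cocycles V p"
        and nf: "\<forall>n F. F \<in> cocycles (P.Q n) p \<longrightarrow> (f, pullback V (P.pr n) F) \<notin> ext_rel V p"
        using P.nonsurj[OF nb] by blast
      have "ext_rel V p `` {f} \<in> Ext1 V p" unfolding Ext1_def using f by (rule quotientI)
      then obtain S where S: "S \<in> colim_Ext1 V p" "canon_map V p S = ext_rel V p `` {f}"
        using bij unfolding bij_betw_def by (metis imageE)
      obtain n F where F: "F \<in> cocycles (P.Q n) p" "S = colim_rel V p `` {(n, F)}" using cls[OF S(1)] by blast
      have "ext_rel V p `` {f} = ext_rel V p `` {pullback V (P.pr n) F}"
        using S(2) F P.canon_class by simp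
      then have "(f, pullback V (P.pr n) F) \<in> ext_rel V p"
        using eq_equiv_class_iff[OF eqE f P.pb_pr_coc[OF F(1)]] by simp
      thus False using nf F(1) by blast
    qed
  qed
qed

end
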